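(* For all $n\ge3$, the number $|\mathcal C_n^*|$ of essential lattice congruences of the weak order on $S_n$ satisfies $2^{2^{n-2}}\le|\mathcal C_n^*|\le 2^{2^n-2n}$. Since distinct congruences have distinct vertex sets, this is also the number $|\mathcal Q_n|$ of quotient graphs $Q_R$, $R\in\mathcal C_n^*$.
   Context: $S_n$ is the set of permutations of $[n]$ with the weak order (inclusion of inversion sets); a lattice congruence is an equivalence relation compatible with joins and meets. Fences. $]a,b[=\{a+1,\dots,b-1\}$. For $1\le a<b\le n$ and $L\subseteq\,]a,b[$, the fence $f(a,b,L)$ is the set of cover edges joining two permutations that differ by swapping adjacent entries $a,b$, with the values of $L$ to the left of $a,b$ and those of $]a,b[\setminus L$ to the right. Forcing order: $f(a,b,L)\prec f(c,d,M)$ iff $a\le c<d\le b$, $(a,b)\ne(c,d)$, $M=L\cap\,]c,d[$. Reading's theorem. Lattice congruences $R$ correspond bijectively to downsets $F_R$ of the forcing order; a cover edge joins $R$-equivalent permutations iff it lies in a fence of $F_R$. $R$ is essential if $F_R$ contains no fence $f(a,a+1,\emptyset)$; $\mathcal C_n^*$ is the set of essential lattice congruences. The quotient graph $Q_R$ is the undirected cover graph of the lattice quotient $S_n/R$ (vertices are the classes). *)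

theory Defs
  imports "HOL-Combinatorics.Permutations" "HOL-Combinatorics.Transposition"
begin

text \<open>A permutation w of [n] in one-line notation: w i is the entry at position i.\<close>

definition Sn :: "nat \<Rightarrow> (nat \<Rightarrow> nat) set" where
  "Sn n = {w. w permutes {1..n}}"

definition inversions :: "nat \<Rightarrow> (nat \<Rightarrow> nat) \<Rightarrow> (nat \<times> nat) set" where
  "inversions n w = {(a,b). 1 \<le> a \<and> a < b \<and> b \<le> n \<and>
      (\<exists>i j. 1 \<le> i \<and> i < j \<and> j \<le> n \<and> w i = b \<and> w j = a)}"

definition weak_le :: "nat \<Rightarrow> (nat \<Rightarrow> nat) \<Rightarrow> (nat \<Rightarrow> nat) \<Rightarrow> bool" where
  "weak_le n u v \<longleftrightarrow> inversions n u \<subseteq> inversions n v"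

definition is_join :: "nat \<Rightarrow> (nat \<Rightarrow> nat) \<Rightarrow> (nat \<Rightarrow> nat) \<Rightarrow> (nat \<Rightarrow> nat) \<Rightarrow> bool" where
  "is_join n x y j \<longleftrightarrow> j \<in> Sn n \<and> weak_le n x j \<and> weak_le n y j \<and>
     (\<forall>z\<in>Sn n. weak_le n x z \<and> weak_le n y z \<longrightarrow> weak_le n j z)"

definition is_meet :: "nat \<Rightarrow> (nat \<Rightarrow> nat) \<Rightarrow> (nat \<Rightarrow> nat) \<Rightarrow> (nat \<Rightarrow> nat) \<Rightarrow> bool" where
  "is_meet n x y m \<longleftrightarrow> m \<in> Sn n \<and> weak_le n m x \<and> weak_le n m y \<and>
     (\<forall>z\<in>Sn n. weak_le n z x \<and> weak_le n z y \<longrightarrow> weak_le n z m)"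

definition lattice_congruence :: "nat \<Rightarrow> ((nat \<Rightarrow> nat) \<times> (nat \<Rightarrow> nat)) set \<Rightarrow> bool" where
  "lattice_congruence n R \<longleftrightarrow> equiv (Sn n) R \<and>
     (\<forall>x\<in>Sn n. \<forall>y\<in>Sn n. \<forall>z\<in>Sn n. (x, y) \<in> R \<longrightarrow>
        (\<forall>j1 j2. is_join n x z j1 \<and> is_join n y z j2 \<longrightarrow> (j1, j2) \<in> R) \<and>
        (\<forall>m1 m2. is_meet n x z m1 \<and> is_meet n y z m2 \<longrightarrow> (m1, m2) \<in> R))"

definition fence_edges :: "nat \<Rightarrow> nat \<Rightarrow> nat \<Rightarrow> nat set \<Rightarrow> ((nat \<Rightarrow> nat) \<times> (nat \<Rightarrow> nat)) set" where
  "fence_edges n a b L = {(u, v). u \<in> Sn n \<and>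
     (\<exists>i. 1 \<le> i \<and> i + 1 \<le> n \<and> u i = a \<and> u (i + 1) = b \<and>
        v = u \<circ> transpose i (i + 1) \<and>
        (\<forall>j\<in>{1..n}. u j \<in> L \<longrightarrow> j < i) \<and>
        (\<forall>j\<in>{1..n}. u j \<in> {a<..<b} - L \<longrightarrow> i + 1 < j))}"

text \<open>The fence f(a,b,L) belongs to F_R (Reading's theorem: exactly when its edges join
  R-equivalent permutations).\<close>
definition fence_in_FR :: "nat \<Rightarrow> ((nat \<Rightarrow> nat) \<times> (nat \<Rightarrow> nat)) set \<Rightarrow> nat \<Rightarrow> nat \<Rightarrow> nat set \<Rightarrow> bool" where
  "fence_in_FR n R a b L \<longleftrightarrow> (\<forall>(u, v)\<in>fence_edges n a b L. (u, v) \<in> R)"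

definition essential :: "nat \<Rightarrow> ((nat \<Rightarrow> nat) \<times> (nat \<Rightarrow> nat)) set \<Rightarrow> bool" where
  "essential n R \<longleftrightarrow> (\<forall>a. 1 \<le> a \<and> a + 1 \<le> n \<longrightarrow> \<not> fence_in_FR n R a (a + 1) {})"

definition essential_congruences :: "nat \<Rightarrow> ((nat \<Rightarrow> nat) \<times> (nat \<Rightarrow> nat)) set set" where
  "essential_congruences n = {R. lattice_congruence n R \<and> essential n R}"

text \<open>Quotient lattice S_n/R: classes ordered by X \<le> Y iff some x\<in>X, y\<in>Y with x \<le> y.
  Q_R is its undirected cover graph: (vertex set, edge set of 2-sets).\<close>
definition quot_le :: "nat \<Rightarrow> (nat \<Rightarrow> nat) set \<Rightarrow> (nat \<Rightarrow> nat) set \<Rightarrow> bool" where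
  "quot_le n X Y \<longleftrightarrow> (\<exists>x\<in>X. \<exists>y\<in>Y. weak_le n x y)"

definition quotient_graph :: "nat \<Rightarrow> ((nat \<Rightarrow> nat) \<times> (nat \<Rightarrow> nat)) set
    \<Rightarrow> (nat \<Rightarrow> nat) set set \<times> (nat \<Rightarrow> nat) set set set" where
  "quotient_graph n R = (Sn n // R,
     {{X, Y} | X Y. X \<in> Sn n // R \<and> Y \<in> Sn n // R \<and> X \<noteq> Y \<and> quot_le n X Y \<and>
        (\<forall>Z\<in>Sn n // R. quot_le n X Z \<and> quot_le n Z Y \<longrightarrow> Z = X \<or> Z = Y)})"

end

theory Submission
  imports Defs
begin


lemma Sn_perm: "w \<in> Sn n \<Longrightarrow> w permutes {1..n}" by (simp add: Sn_def)

lemma inv_mem: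
  assumes "w \<in> Sn n"
  shows "(a,b) \<in> inversions n w \<longleftrightarrow> 1 \<le> a \<and> a < b \<and> b \<le> n \<and> inv w b < inv w a"
proof -
  have p: "w permutes {1..n}" using assms by (simp add: Sn_def)
  have ip: "inv w permutes {1..n}" using permutes_inv[OF p] .
    show ?thesis
    proof
      assume "(a,b) \<in> inversions n w"
      then obtain i j where hh: "1 \<le> a" "a < b" "b \<le> n" "1 \<le> i" "i < j" "j \<le> n" "w i = b" "w j = a"
        unfolding inversions_def by blast
      have "inv w b = i" "inv w a = j" using permutes_inverses(2)[OF p] hh(7,8) by metis+
      then show "1 \<le> a \<and> a < b \<and> b \<le> n \<and> inv w b < inv w a"
        using hh(1-5) by simp
    next
      assume h: "1 \<le> a \<and> a < b \<and> b \<le> n \<and> inv w b < inv w a"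
      have a1: "a \<in> {1..n}" "b \<in> {1..n}" using h by auto
      have i1: "inv w a \<in> {1..n}" "inv w b \<in> {1..n}"
        using a1 permutes_in_image[OF ip] by blast+
      have i2: "w (inv w a) = a" "w (inv w b) = b" using permutes_inverses(1)[OF p] by blast+
      have ex: "\<exists>i j. 1 \<le> i \<and> i < j \<and> j \<le> n \<and> w i = b \<and> w j = a"
        apply (rule exI[of _ "inv w b"], rule exI[of _ "inv w a"])
        using i1 i2 h by simp
      show "(a,b) \<in> inversions n w" unfolding inversions_def
        apply (simp only: mem_Collect_eq case_prod_conv)
        using h ex by blast
    qed
qed

lemma inv_char:
  assumes "w \<in> Sn n"
  shows "inversions n w = {(a,b). 1 \<le> a \<and> a < b \<and> b \<le> n \<and> inv w b < inv w a}"
  using inv_mem[OF assms] by blast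

lemma inv_in: "w \<in> Sn n \<Longrightarrow> x \<in> {1..n} \<Longrightarrow> inv w x \<in> {1..n}"
  using permutes_in_image[OF permutes_inv[OF Sn_perm]] by blast

lemma w_in: "w \<in> Sn n \<Longrightarrow> x \<in> {1..n} \<Longrightarrow> w x \<in> {1..n}"
  using permutes_in_image[OF Sn_perm] by blast

lemma inv_inj: "w \<in> Sn n \<Longrightarrow> inv w x = inv w y \<Longrightarrow> x = y"
  by (metis Sn_perm permutes_inverses(1))

lemma w_inv: "w \<in> Sn n \<Longrightarrow> w (inv w x) = x"
  by (metis Sn_perm permutes_inverses(1))

lemma inv_w: "w \<in> Sn n \<Longrightarrow> inv w (w x) = x"
  by (metis Sn_perm permutes_inverses(2))

definition Pairs :: "nat \<Rightarrow> (nat \<times> nat) set" where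
  "Pairs n = {(a,b). 1 \<le> a \<and> a < b \<and> b \<le> n}"

definition tcot :: "nat \<Rightarrow> (nat \<times> nat) set \<Rightarrow> bool" where
  "tcot n I \<longleftrightarrow> I \<subseteq> Pairs n \<and> (\<forall>a b c. (a,b)\<in>I \<longrightarrow> (b,c)\<in>I \<longrightarrow> (a,c)\<in>I)
     \<and> (\<forall>a b c. (a,c)\<in>I \<longrightarrow> a<b \<longrightarrow> b<c \<longrightarrow> (a,b)\<in>I \<or> (b,c)\<in>I)"

lemma tcot_inv:
  assumes w: "w \<in> Sn n" shows "tcot n (inversions n w)"
proof -
  have ne: "\<And>x y. x \<noteq> y \<Longrightarrow> inv w x \<noteq> inv w y" using inv_inj[OF w] by blast
  have 1: "inversions n w \<subseteq> Pairs n" unfolding Pairs_def using inv_mem[OF w] by auto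
  have 2: "\<forall>a b c. (a,b)\<in>inversions n w \<longrightarrow> (b,c)\<in>inversions n w \<longrightarrow> (a,c)\<in>inversions n w"
  proof (intro allI impI)
    fix a b c assume "(a,b)\<in>inversions n w" "(b,c)\<in>inversions n w"
    then have "1 \<le> a" "a < b" "b \<le> n" "inv w b < inv w a" "b < c" "c \<le> n" "inv w c < inv w b"
      using inv_mem[OF w] by blast+
    then show "(a,c)\<in>inversions n w" using inv_mem[OF w] by simp
  qed
  have 3: "\<forall>a b c. (a,c)\<in>inversions n w \<longrightarrow> a<b \<longrightarrow> b<c \<longrightarrow> (a,b)\<in>inversions n w \<or> (b,c)\<in>inversions n w"
  proof (intro allI impI)
    fix a b c assume "(a,c)\<in>inversions n w" and bc: "a < b" "b < c"
    then have h: "1 \<le> a" "a < c" "c \<le> n" "inv w c < inv w a"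
      using inv_mem[OF w] by blast+
    have "inv w b \<noteq> inv w a" "inv w b \<noteq> inv w c" using ne bc by auto
    then have "inv w b < inv w a \<or> inv w c < inv w b" using h(4) by linarith
    then show "(a,b)\<in>inversions n w \<or> (b,c)\<in>inversions n w"
      using inv_mem[OF w] h bc by simp
  qed
  show ?thesis unfolding tcot_def using 1 2 3 by blast
qed

lemma card_less_pos:
  assumes p: "q permutes {1..n}" and a: "a \<in> {1..n}"
  shows "card {b\<in>{1..n}. q b < q a} = q a - 1"
proof -
  have qa: "q a \<in> {1..n}" using permutes_in_image[OF p] a by blast
  have "q ` {b\<in>{1..n}. q b < q a} = q ` {1..n} \<inter> {i. i < q a}" by blast
  then have "q ` {b\<in>{1..n}. q b < q a} = {1..n} \<inter> {i. i < q a}" by (simp only: permutes_image[OF p])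
  moreover have "inj_on q {b\<in>{1..n}. q b < q a}" using permutes_inj_on[OF p] .
  moreover have "{1..n} \<inter> {i. i < q a} = {1..<q a}" using qa by auto
  ultimately show ?thesis by (metis card_atLeastLessThan card_image)
qed

lemma inversions_inj:
  assumes u: "u \<in> Sn n" and v: "v \<in> Sn n" and e: "inversions n u = inversions n v"
  shows "u = v"
proof -
  have pu: "inv u permutes {1..n}" and pv: "inv v permutes {1..n}"
    using permutes_inv[OF Sn_perm[OF u]] permutes_inv[OF Sn_perm[OF v]] by blast+
  have ord: "inv u b < inv u a \<longleftrightarrow> inv v b < inv v a" if "a \<in> {1..n}" "b \<in> {1..n}" for a b
  proof (cases a b rule: linorder_cases)
    case less
    have "(a,b) \<in> inversions n u \<longleftrightarrow> (a,b) \<in> inversions n v" using e by simp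
    then show ?thesis using less that unfolding inv_mem[OF u] inv_mem[OF v] by simp
  next
    case equal then show ?thesis by simp
  next
    case greater
    have "(b,a) \<in> inversions n u \<longleftrightarrow> (b,a) \<in> inversions n v" using e by simp
    then have "inv u a < inv u b \<longleftrightarrow> inv v a < inv v b"
      using greater that unfolding inv_mem[OF u] inv_mem[OF v] by simp
    moreover have "inv u a \<noteq> inv u b" "inv v a \<noteq> inv v b" using greater inv_inj[OF u, of a b] inv_inj[OF v, of a b] by auto
    ultimately show ?thesis by auto
  qed
  have "inv u a = inv v a" for a
  proof (cases "a \<in> {1..n}")
    case True
    have "{b\<in>{1..n}. inv u b < inv u a} = {b\<in>{1..n}. inv v b < inv v a}"
    proof (rule Collect_cong)
      fix b show "(b \<in> {1..n} \<and> inv u b < inv u a) = (b \<in> {1..n} \<and> inv v b < inv v a)"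
        using ord[OF True, of b] by blast
    qed
    then have "inv u a - 1 = inv v a - 1" using card_less_pos[OF pu True] card_less_pos[OF pv True] by simp
    moreover have "inv u a \<ge> 1" "inv v a \<ge> 1" using inv_in[OF u True] inv_in[OF v True] by auto
    ultimately show ?thesis by simp
  next
    case False then show ?thesis using permutes_not_in[OF pu] permutes_not_in[OF pv] by simp
  qed
  then have "inv u = inv v" by auto
  then show ?thesis using permutes_inv_inv[OF Sn_perm[OF u]] permutes_inv_inv[OF Sn_perm[OF v]] by metis
qed

lemma weak_antisym: "u \<in> Sn n \<Longrightarrow> v \<in> Sn n \<Longrightarrow> weak_le n u v \<Longrightarrow> weak_le n v u \<Longrightarrow> u = v"
  unfolding weak_le_def using inversions_inj by blast


definition precI :: "(nat \<times> nat) set \<Rightarrow> nat \<Rightarrow> nat \<Rightarrow> bool" where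
  "precI I b a \<longleftrightarrow> (a < b \<and> (a,b) \<in> I) \<or> (b < a \<and> (b,a) \<notin> I)"

lemma precI_irrefl: "\<not> precI I a a" by (simp add: precI_def)

lemma precI_total: "a \<noteq> b \<Longrightarrow> precI I a b \<or> precI I b a"
  unfolding precI_def by (cases a b rule: linorder_cases) auto

lemma precI_trans:
  assumes T: "\<forall>a b c. (a,b)\<in>I \<longrightarrow> (b,c)\<in>I \<longrightarrow> (a,c)\<in>I"
    and C: "\<forall>a b c. (a,c)\<in>I \<longrightarrow> a<b \<longrightarrow> b<c \<longrightarrow> (a,b)\<in>I \<or> (b,c)\<in>I"
    and h1: "precI I c b" and h2: "precI I b a"
  shows "precI I c a"
proof -
  have ab: "a \<noteq> b" and bc: "b \<noteq> c" using h1 h2 by (auto simp: precI_def)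
  show ?thesis
  proof (cases a b rule: linorder_cases)
    case less
    then have Iab: "(a,b) \<in> I" using h2 by (auto simp: precI_def)
    show ?thesis
    proof (cases b c rule: linorder_cases)
      case less
      then have "(b,c) \<in> I" using h1 by (auto simp: precI_def)
      then have "(a,c) \<in> I" using T Iab by blast
      then show ?thesis using \<open>a < b\<close> less by (simp add: precI_def)
    next
      case equal then show ?thesis using bc by simp
    next
      case greater
      then have nIcb: "(c,b) \<notin> I" using h1 by (auto simp: precI_def)
      show ?thesis
      proof (cases a c rule: linorder_cases)
        case less
        then have "(a,c) \<in> I" using C Iab greater nIcb by blast
        then show ?thesis using less by (simp add: precI_def)
      next
        case equal
        then show ?thesis using Iab nIcb \<open>a < b\<close> by (simp add: precI_def)
      next
        case greater
        have "(c,a) \<notin> I" using T Iab nIcb by blast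
        then show ?thesis using greater by (simp add: precI_def)
      qed
    qed
  next
    case equal then show ?thesis using ab by simp
  next
    case greater
    then have nIba: "(b,a) \<notin> I" using h2 by (auto simp: precI_def)
    show ?thesis
    proof (cases b c rule: linorder_cases)
      case less
      then have Ibc: "(b,c) \<in> I" using h1 by (auto simp: precI_def)
      show ?thesis
      proof (cases a c rule: linorder_cases)
        case less
        have "(a,c) \<in> I" using C Ibc nIba \<open>b < a\<close> less by blast
        then show ?thesis using less by (simp add: precI_def)
      next
        case equal then show ?thesis using Ibc nIba by simp
      next
        case greater
        have "(c,a) \<notin> I" using T Ibc nIba by blast
        then show ?thesis using greater by (simp add: precI_def)
      qed
    next
      case equal then show ?thesis using bc by simp
    next
      case greater
      then have nIcb: "(c,b) \<notin> I" using h1 by (auto simp: precI_def)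
      have "(c,a) \<notin> I" using C nIcb nIba greater \<open>b < a\<close> by blast
      then show ?thesis using greater \<open>b < a\<close> by (simp add: precI_def)
    qed
  qed
qed

lemma realize:
  assumes I: "tcot n I"
  shows "\<exists>w\<in>Sn n. inversions n w = I"
proof -
  have T: "\<forall>a b c. (a,b)\<in>I \<longrightarrow> (b,c)\<in>I \<longrightarrow> (a,c)\<in>I"
    and C: "\<forall>a b c. (a,c)\<in>I \<longrightarrow> a<b \<longrightarrow> b<c \<longrightarrow> (a,b)\<in>I \<or> (b,c)\<in>I"
    and P: "I \<subseteq> Pairs n" using I unfolding tcot_def by blast+
  define S where "S a = {c\<in>{1..n}. precI I c a}" for a
  define pos where "pos a = (if a \<in> {1..n} then card (S a) + 1 else a)" for a
  have finS: "finite (S a)" for a unfolding S_def by simp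
  have mono: "card (S b) < card (S a)" if "precI I b a" "b \<in> {1..n}" for a b
  proof (rule psubset_card_mono[OF finS])
    show "S b \<subset> S a"
    proof
      show "S b \<subseteq> S a" unfolding S_def using precI_trans[OF T C _ that(1)] by blast
      show "S b \<noteq> S a"
      proof
        assume "S b = S a"
        moreover have "b \<in> S a" unfolding S_def using that by simp
        moreover have "b \<notin> S b" unfolding S_def using precI_irrefl by blast
        ultimately show False by simp
      qed
    qed
  qed
  have ord: "pos b < pos a \<longleftrightarrow> precI I b a" if "a \<in> {1..n}" "b \<in> {1..n}" "a \<noteq> b" for a b
  proof
    assume "pos b < pos a"
    then have "card (S b) < card (S a)" using that unfolding pos_def by simp
    moreover have "\<not> precI I a b" if "card (S b) < card (S a)"
      using mono[of a b] that \<open>a \<in> {1..n}\<close> by linarith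
    ultimately show "precI I b a" using precI_total[OF \<open>a \<noteq> b\<close>, of I] by blast
  next
    assume h: "precI I b a"
    have "card (S b) < card (S a)" using mono[OF h] that by simp
    then show "pos b < pos a" using that unfolding pos_def by simp
  qed
  have injp: "inj_on pos {1..n}"
  proof (rule inj_onI)
    fix a b assume "a \<in> {1..n}" "b \<in> {1..n}" "pos a = pos b"
    then show "a = b" using ord[of a b] ord[of b a] precI_total[of a b I] by fastforce
  qed
  have rng: "pos a \<in> {1..n}" if "a \<in> {1..n}" for a
  proof -
    have "S a \<subseteq> {1..n} - {a}" unfolding S_def using precI_irrefl by blast
    then have "card (S a) \<le> card ({1..n} - {a})" by (intro card_mono) auto
    also have "\<dots> = n - 1" using that by simp
    finally show ?thesis using that unfolding pos_def by auto
  qed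
  have pp: "pos permutes {1..n}"
  proof (rule inj_imp_permutes[OF injp])
    show "finite {1..n}" by simp
    show "\<And>x. x \<in> {1..n} \<Longrightarrow> pos x \<in> {1..n}" by (rule rng)
    show "\<And>i. i \<notin> {1..n} \<Longrightarrow> pos i = i" unfolding pos_def by presburger
  qed
  define w where "w = inv pos"
  have w: "w \<in> Sn n" unfolding w_def Sn_def using permutes_inv[OF pp] by simp
  have iw: "inv w = pos" unfolding w_def using permutes_inv_inv[OF pp] .
  have "inversions n w = I"
  proof (rule set_eqI, clarify)
    fix a b
    show "(a,b) \<in> inversions n w \<longleftrightarrow> (a,b) \<in> I"
    proof
      assume "(a,b) \<in> inversions n w"
      then have h: "1 \<le> a" "a < b" "b \<le> n" "pos b < pos a" using inv_mem[OF w] iw by auto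
      then have "precI I b a" using ord[of a b] by simp
      then show "(a,b) \<in> I" using h(2) unfolding precI_def by simp
    next
      assume ab: "(a,b) \<in> I"
      then have h: "1 \<le> a" "a < b" "b \<le> n" using P unfolding Pairs_def by auto
      then have "precI I b a" using ab unfolding precI_def by simp
      then have "pos b < pos a" using ord[of a b] h by simp
      then show "(a,b) \<in> inversions n w" using inv_mem[OF w] iw h by simp
    qed
  qed
  then show ?thesis using w by blast
qed


lemma Pairs_trans: "(a,b) \<in> Pairs n \<Longrightarrow> (b,c) \<in> Pairs n \<Longrightarrow> (a,c) \<in> Pairs n"
  unfolding Pairs_def by auto

lemma trancl_Pairs: "I \<subseteq> Pairs n \<Longrightarrow> I\<^sup>+ \<subseteq> Pairs n"
proof
  fix p assume I: "I \<subseteq> Pairs n" and "p \<in> I\<^sup>+"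
  obtain a c where p: "p = (a,c)" by (cases p)
  have "(a,c) \<in> I\<^sup>+" using p \<open>p \<in> I\<^sup>+\<close> by simp
  then have "(a,c) \<in> Pairs n"
    by (induction rule: trancl_induct) (use I Pairs_trans in blast)+
  then show "p \<in> Pairs n" using p by simp
qed

lemma tcot_trancl:
  assumes P: "I \<subseteq> Pairs n"
    and C: "\<forall>a b c. (a,c)\<in>I \<longrightarrow> a<b \<longrightarrow> b<c \<longrightarrow> (a,b)\<in>I \<or> (b,c)\<in>I"
  shows "tcot n (I\<^sup>+)"
proof -
  have lt: "a < b" if "(a,b) \<in> I" for a b using P that unfolding Pairs_def by auto
  have "\<forall>b. a<b \<longrightarrow> b<c \<longrightarrow> (a,b)\<in>I\<^sup>+ \<or> (b,c)\<in>I\<^sup>+" if "(a,c) \<in> I\<^sup>+" for a c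
    using that
  proof (induction rule: trancl_induct)
    case (base y)
    then show ?case using C by blast
  next
    case (step d c)
    show ?case
    proof (intro allI impI)
      fix b assume b: "a < b" "b < c"
      have dc: "d < c" using lt step(2) .
      show "(a,b)\<in>I\<^sup>+ \<or> (b,c)\<in>I\<^sup>+"
      proof (cases b d rule: linorder_cases)
        case less
        then have "(a,b)\<in>I\<^sup>+ \<or> (b,d)\<in>I\<^sup>+" using step(3) b by blast
        then show ?thesis using step(2) by (meson trancl.trancl_into_trancl)
      next
        case equal then show ?thesis using step(1) by simp
      next
        case greater
        then have "(d,b)\<in>I \<or> (b,c)\<in>I" using C step(2) b by blast
        then show ?thesis using step(1) by (meson r_into_trancl' trancl.trancl_into_trancl)
      qed
    qed
  qed
  then show ?thesis unfolding tcot_def using trancl_Pairs[OF P] trans_trancl[of I]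
    by (metis transD)
qed

lemma tcot_compl:
  assumes I: "tcot n I" shows "tcot n (Pairs n - I)"
proof -
  have T: "\<forall>a b c. (a,b)\<in>I \<longrightarrow> (b,c)\<in>I \<longrightarrow> (a,c)\<in>I"
    and C: "\<forall>a b c. (a,c)\<in>I \<longrightarrow> a<b \<longrightarrow> b<c \<longrightarrow> (a,b)\<in>I \<or> (b,c)\<in>I"
    using I unfolding tcot_def by blast+
  have 1: "Pairs n - I \<subseteq> Pairs n" by blast
  have 2: "\<forall>a b c. (a,b)\<in>Pairs n - I \<longrightarrow> (b,c)\<in>Pairs n - I \<longrightarrow> (a,c)\<in>Pairs n - I"
  proof (intro allI impI)
    fix a b c assume ab: "(a,b)\<in>Pairs n - I" and bc: "(b,c)\<in>Pairs n - I"
    then have "(a,c) \<in> Pairs n" using Pairs_trans by blast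
    moreover have "a < b" "b < c" using ab bc unfolding Pairs_def by auto
    ultimately show "(a,c)\<in>Pairs n - I" using C ab bc by blast
  qed
  have 3: "\<forall>a b c. (a,c)\<in>Pairs n - I \<longrightarrow> a<b \<longrightarrow> b<c \<longrightarrow> (a,b)\<in>Pairs n - I \<or> (b,c)\<in>Pairs n - I"
  proof (intro allI impI)
    fix a b c assume ac: "(a,c)\<in>Pairs n - I" and "a < b" "b < c"
    then have "(a,b) \<in> Pairs n" "(b,c) \<in> Pairs n" unfolding Pairs_def by auto
    then show "(a,b)\<in>Pairs n - I \<or> (b,c)\<in>Pairs n - I" using T ac by blast
  qed
  show ?thesis unfolding tcot_def using 1 2 3 by blast
qed

definition joinw :: "nat \<Rightarrow> (nat \<Rightarrow> nat) \<Rightarrow> (nat \<Rightarrow> nat) \<Rightarrow> (nat \<Rightarrow> nat)" where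
  "joinw n x y = (SOME j. j \<in> Sn n \<and> inversions n j = (inversions n x \<union> inversions n y)\<^sup>+)"

definition meetw :: "nat \<Rightarrow> (nat \<Rightarrow> nat) \<Rightarrow> (nat \<Rightarrow> nat) \<Rightarrow> (nat \<Rightarrow> nat)" where
  "meetw n x y = (SOME j. j \<in> Sn n \<and> inversions n j =
      Pairs n - ((Pairs n - inversions n x) \<union> (Pairs n - inversions n y))\<^sup>+)"

lemma trans_sub_trancl:
  assumes "tcot n Z" "I \<subseteq> Z" shows "I\<^sup>+ \<subseteq> Z"
proof -
  have "trans Z" using assms(1) unfolding tcot_def trans_def by blast
  then show ?thesis using assms(2) by (metis trancl_id trancl_mono subsetI)
qed

lemma join_exists:
  assumes x: "x \<in> Sn n" and y: "y \<in> Sn n"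
  shows "is_join n x y (joinw n x y)"
proof -
  let ?I = "inversions n x \<union> inversions n y"
  have tx: "tcot n (inversions n x)" and ty: "tcot n (inversions n y)" using tcot_inv x y by auto
  have P: "?I \<subseteq> Pairs n" using tx ty unfolding tcot_def by auto
  have C: "\<forall>a b c. (a,c)\<in>?I \<longrightarrow> a<b \<longrightarrow> b<c \<longrightarrow> (a,b)\<in>?I \<or> (b,c)\<in>?I"
    using tx ty unfolding tcot_def by blast
  obtain j where "j \<in> Sn n" "inversions n j = ?I\<^sup>+" using realize[OF tcot_trancl[OF P C]] by blast
  then have j: "joinw n x y \<in> Sn n" "inversions n (joinw n x y) = ?I\<^sup>+"
    unfolding joinw_def by (metis (mono_tags, lifting) someI_ex)+
  show ?thesis unfolding is_join_def weak_le_def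
  proof (intro conjI ballI impI)
    show "joinw n x y \<in> Sn n" using j(1) .
    show "inversions n x \<subseteq> inversions n (joinw n x y)" using j(2) by auto
    show "inversions n y \<subseteq> inversions n (joinw n x y)" using j(2) by auto
    fix z assume z: "z \<in> Sn n" "inversions n x \<subseteq> inversions n z \<and> inversions n y \<subseteq> inversions n z"
    then show "inversions n (joinw n x y) \<subseteq> inversions n z"
      using j(2) trans_sub_trancl[OF tcot_inv[OF z(1)]] by auto
  qed
qed

lemma meet_exists:
  assumes x: "x \<in> Sn n" and y: "y \<in> Sn n"
  shows "is_meet n x y (meetw n x y)"
proof -
  let ?I = "(Pairs n - inversions n x) \<union> (Pairs n - inversions n y)"
  have tx: "tcot n (Pairs n - inversions n x)" and ty: "tcot n (Pairs n - inversions n y)"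
    using tcot_compl tcot_inv x y by auto
  have P: "?I \<subseteq> Pairs n" by auto
  have C: "\<forall>a b c. (a,c)\<in>?I \<longrightarrow> a<b \<longrightarrow> b<c \<longrightarrow> (a,b)\<in>?I \<or> (b,c)\<in>?I"
    using tx ty unfolding tcot_def by blast
  have tc: "tcot n (Pairs n - ?I\<^sup>+)"
  proof -
    have "tcot n (Pairs n - (Pairs n - ?I\<^sup>+))" using tcot_compl[OF tcot_compl[OF tcot_trancl[OF P C]]] .
    moreover have "Pairs n - (Pairs n - ?I\<^sup>+) = ?I\<^sup>+" using trancl_Pairs[OF P] by blast
    ultimately have "tcot n (?I\<^sup>+)" by simp
    then show ?thesis using tcot_compl by blast
  qed
  obtain j where "j \<in> Sn n" "inversions n j = Pairs n - ?I\<^sup>+" using realize[OF tc] by blast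
  then have j: "meetw n x y \<in> Sn n" "inversions n (meetw n x y) = Pairs n - ?I\<^sup>+"
    unfolding meetw_def by (metis (mono_tags, lifting) someI_ex)+
  have ix: "inversions n x \<subseteq> Pairs n" "inversions n y \<subseteq> Pairs n" using tcot_inv[OF x] tcot_inv[OF y] unfolding tcot_def by blast+
  show ?thesis unfolding is_meet_def weak_le_def
  proof (intro conjI ballI impI)
    show "meetw n x y \<in> Sn n" using j(1) .
    show "inversions n (meetw n x y) \<subseteq> inversions n x" using j(2) ix by auto
    show "inversions n (meetw n x y) \<subseteq> inversions n y" using j(2) ix by auto
    fix z assume z: "z \<in> Sn n" "inversions n z \<subseteq> inversions n x \<and> inversions n z \<subseteq> inversions n y"
    have tz: "tcot n (Pairs n - inversions n z)" using tcot_compl tcot_inv z(1) by blast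
    have "?I \<subseteq> Pairs n - inversions n z" using z(2) by blast
    then have "?I\<^sup>+ \<subseteq> Pairs n - inversions n z" using trans_sub_trancl[OF tz] by blast
    moreover have "inversions n z \<subseteq> Pairs n" using tcot_inv[OF z(1)] unfolding tcot_def by blast
    ultimately show "inversions n z \<subseteq> inversions n (meetw n x y)" using j(2) by blast
  qed
qed

lemma join_unique: "is_join n x y j1 \<Longrightarrow> is_join n x y j2 \<Longrightarrow> j1 = j2"
  unfolding is_join_def using weak_antisym by blast

lemma meet_unique: "is_meet n x y j1 \<Longrightarrow> is_meet n x y j2 \<Longrightarrow> j1 = j2"
  unfolding is_meet_def using weak_antisym by blast


abbreviation sw :: "nat \<Rightarrow> nat \<Rightarrow> nat" where "sw i \<equiv> Transposition.transpose i (i+1)"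

lemma sw_perm: "1 \<le> i \<Longrightarrow> i + 1 \<le> n \<Longrightarrow> sw i permutes {1..n}"
  by (rule permutes_swap_id) auto

lemma sw_Sn: 
  assumes w: "w \<in> Sn n" and i: "1 \<le> i" "i + 1 \<le> n" shows "w \<circ> sw i \<in> Sn n"
proof -
  have "sw i permutes {1..n}" using sw_perm i by blast
  then have "w \<circ> sw i permutes {1..n}" using permutes_compose Sn_perm[OF w] by blast
  then show ?thesis by (simp add: Sn_def)
qed

lemma w_inj: "w \<in> Sn n \<Longrightarrow> w x = w y \<Longrightarrow> x = y"
  using permutes_inj[OF Sn_perm] by (metis injD)

lemma inv_sw:
  assumes w: "w \<in> Sn n" and i: "1 \<le> i" "i + 1 \<le> n"
  shows "inv (w \<circ> sw i) c = sw i (inv w c)"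
proof -
  have w': "w \<circ> sw i \<in> Sn n" using sw_Sn[OF w i] .
  have "(w \<circ> sw i) (sw i (inv w c)) = c" using w_inv[OF w] by simp
  then show ?thesis using inv_w[OF w'] by metis
qed

lemma sw_less:
  assumes "x \<noteq> y"
  shows "sw i x < sw i y \<longleftrightarrow> (x < y \<and> \<not> (x = i \<and> y = i + 1)) \<or> (x = i + 1 \<and> y = i)"
  using assms unfolding transpose_def by auto

lemma inv_sw_mem:
  assumes w: "w \<in> Sn n" and i: "1 \<le> i" "i + 1 \<le> n"
  shows "(a,b) \<in> inversions n (w \<circ> sw i) \<longleftrightarrow>
     1 \<le> a \<and> a < b \<and> b \<le> n \<and> sw i (inv w b) < sw i (inv w a)"
  using inv_mem[OF sw_Sn[OF w i]] inv_sw[OF w i] by simp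

lemma asc_sw:
  assumes w: "w \<in> Sn n" and i: "1 \<le> i" "i + 1 \<le> n" and asc: "w i < w (i+1)"
  shows "inversions n (w \<circ> sw i) = insert (w i, w (i+1)) (inversions n w)"
proof (rule set_eqI, clarify)
  fix a b
  have pi: "inv w (w i) = i" "inv w (w (i+1)) = i + 1" using inv_w[OF w] by auto
  show "(a,b) \<in> inversions n (w \<circ> sw i) \<longleftrightarrow> (a,b) \<in> insert (w i, w (i+1)) (inversions n w)"
  proof (cases "1 \<le> a \<and> a < b \<and> b \<le> n")
    case False
    moreover have "w i \<in> {1..n}" "w (i+1) \<in> {1..n}" using w_in[OF w] i by auto
    ultimately show ?thesis using inv_sw_mem[OF w i] inv_mem[OF w] asc by auto
  next
    case True
    have ne: "inv w b \<noteq> inv w a" using inv_inj[OF w] True by fastforce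
    have e1: "(a,b) \<in> inversions n (w \<circ> sw i) \<longleftrightarrow> sw i (inv w b) < sw i (inv w a)"
      using inv_sw_mem[OF w i] True by simp
    have e2: "(a,b) \<in> inversions n w \<longleftrightarrow> inv w b < inv w a"
      using inv_mem[OF w] True by simp
    have x1: "\<not> (inv w b = i \<and> inv w a = i + 1)"
    proof
      assume "inv w b = i \<and> inv w a = i + 1"
      then have "b = w i" "a = w (i+1)" using w_inv[OF w] by metis+
      then show False using True asc by simp
    qed
    have x2: "(inv w b = i + 1 \<and> inv w a = i) \<longleftrightarrow> (a,b) = (w i, w (i+1))"
    proof
      assume "inv w b = i + 1 \<and> inv w a = i"
      then have "w (inv w b) = w (i+1)" "w (inv w a) = w i" by simp_all
      then show "(a,b) = (w i, w (i+1))" using w_inv[OF w] by simp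
    next
      assume "(a,b) = (w i, w (i+1))"
      then show "inv w b = i + 1 \<and> inv w a = i" using pi by simp
    qed
    show ?thesis unfolding e1 sw_less[OF ne] using e2 x1 x2 by auto
  qed
qed

lemma desc_sw:
  assumes w: "w \<in> Sn n" and i: "1 \<le> i" "i + 1 \<le> n" and desc: "w (i+1) < w i"
  shows "inversions n (w \<circ> sw i) = inversions n w - {(w (i+1), w i)}"
proof -
  let ?w = "w \<circ> sw i"
  have w': "?w \<in> Sn n" using sw_Sn[OF w i] .
  have "?w \<circ> sw i = w" by (simp add: comp_assoc)
  moreover have "?w i < ?w (i+1)" using desc by simp
  ultimately have "inversions n w = insert (?w i, ?w (i+1)) (inversions n ?w)"
    using asc_sw[OF w' i] by metis
  moreover have "(?w i, ?w (i+1)) = (w (i+1), w i)" by simp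
  moreover have "(w (i+1), w i) \<notin> inversions n ?w"
    using inv_sw_mem[OF w i] inv_w[OF w] by simp
  ultimately show ?thesis by auto
qed

lemma mono_run:
  assumes "\<And>k. p \<le> k \<Longrightarrow> k < q \<Longrightarrow> (w::nat\<Rightarrow>nat) k < w (k+1)" and "p < q"
  shows "w p < w q"
  using assms
proof (induction q)
  case 0 then show ?case by simp
next
  case (Suc q)
  show ?case
  proof (cases "p < q")
    case True
    then have "w p < w q" using Suc by simp
    also have "w q < w (Suc q)" using Suc.prems(1)[of q] True by simp
    finally show ?thesis .
  next
    case False
    then have "p = q" using Suc.prems(2) by simp
    then show ?thesis using Suc.prems(1)[of q] by simp
  qed
qed

lemma has_descent:
  assumes w: "w \<in> Sn n" and ne: "inversions n w \<noteq> {}"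
  shows "\<exists>k. 1 \<le> k \<and> k + 1 \<le> n \<and> w (k+1) < w k"
proof (rule ccontr)
  assume nd: "\<not> ?thesis"
  then have asc: "\<And>k. 1 \<le> k \<Longrightarrow> k < n \<Longrightarrow> w k < w (k+1)"
  proof -
    fix k assume k: "1 \<le> k" "k < n"
    then have "\<not> w (k+1) < w k" using nd by auto
    moreover have "w (k+1) \<noteq> w k" using w_inj[OF w, of "k+1" k] by auto
    ultimately show "w k < w (k+1)" by simp
  qed
  obtain a b where ab: "(a,b) \<in> inversions n w" using ne by auto
  then have h: "1 \<le> a" "a < b" "b \<le> n" "inv w b < inv w a" using inv_mem[OF w] by auto
  have "inv w b \<in> {1..n}" "inv w a \<in> {1..n}" using inv_in[OF w] h by auto
  then have "w (inv w b) < w (inv w a)"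
    using mono_run[of "inv w b" "inv w a" w] asc h(4) by simp
  then show False using w_inv[OF w] h by simp
qed


lemma cover_step:
  assumes u: "u \<in> Sn n" and v: "v \<in> Sn n" and sub: "inversions n u \<subseteq> inversions n v"
  shows "(a,b) \<in> inversions n v \<Longrightarrow> (a,b) \<notin> inversions n u \<Longrightarrow>
    \<exists>i. 1 \<le> i \<and> i + 1 \<le> n \<and> u i < u (i+1) \<and> (u i, u (i+1)) \<in> inversions n v"
proof (induction "inv u b - inv u a" arbitrary: a b rule: less_induct)
  case less
  have h: "1 \<le> a" "a < b" "b \<le> n" "inv v b < inv v a" using less.prems(1) inv_mem[OF v] by auto
  have neu: "inv u a \<noteq> inv u b" using inv_inj[OF u, of a b] h by auto
  have pu: "inv u a < inv u b" using less.prems(2) inv_mem[OF u] h neu by auto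
  have ia: "inv u a \<in> {1..n}" "inv u b \<in> {1..n}" using inv_in[OF u] h by auto
  define k where "k = inv u a + 1"
  show ?case
  proof (cases "k = inv u b")
    case True
    have "u (inv u a) = a" "u k = b" using w_inv[OF u] True by auto
    then show ?thesis using ia h less.prems(1) True unfolding k_def by (intro exI[of _ "inv u a"]) auto
  next
    case False
    then have kb: "k < inv u b" using pu k_def by simp
    have kn: "k \<in> {1..n}" using kb ia k_def by auto
    define c where "c = u k"
    have pc: "inv u c = k" unfolding c_def using inv_w[OF u] .
    have cn: "c \<in> {1..n}" unfolding c_def using w_in[OF u kn] .
    have ca: "c \<noteq> a" using pc k_def by auto
    have cb: "c \<noteq> b" using pc kb by auto
    have nev: "inv v x \<noteq> inv v y" if "x \<noteq> y" for x y using inv_inj[OF v] that by blast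
    have IH: "\<exists>i. 1 \<le> i \<and> i + 1 \<le> n \<and> u i < u (i+1) \<and> (u i, u (i+1)) \<in> inversions n v"
      if "inv u y - inv u x < inv u b - inv u a" "(x,y) \<in> inversions n v" "(x,y) \<notin> inversions n u" for x y
      using less.hyps that by blast
    show ?thesis
    proof (cases "a < c")
      case True
      show ?thesis
      proof (cases "(a,c) \<in> inversions n v")
        case True
        have "(a,c) \<notin> inversions n u" using inv_mem[OF u] pc k_def by simp
        moreover have "inv u c - inv u a < inv u b - inv u a" using pc k_def kb by simp
        ultimately show ?thesis using IH True by blast
      next
        case False
        then have "\<not> inv v c < inv v a" using inv_mem[OF v] h cn \<open>a < c\<close> by auto
        then have pvac: "inv v a < inv v c" using nev[OF ca] by linarith
        show ?thesis
        proof (cases "c < b")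
          case True
          have "(c,b) \<in> inversions n v" using inv_mem[OF v] h \<open>a < c\<close> True pvac by simp
          moreover have "(c,b) \<notin> inversions n u" using inv_mem[OF u] pc kb by simp
          moreover have "inv u b - inv u c < inv u b - inv u a" using pc k_def kb by simp
          ultimately show ?thesis using IH by blast
        next
          case False
          then have "b < c" using cb by simp
          then have "(b,c) \<in> inversions n u" using inv_mem[OF u] h cn pc kb by simp
          then have "(b,c) \<in> inversions n v" using sub by blast
          then have "inv v c < inv v b" using inv_mem[OF v] by simp
          then show ?thesis using pvac h by simp
        qed
      qed
    next
      case False
      then have "c < a" using ca by simp
      then have "(c,a) \<in> inversions n u" using inv_mem[OF u] h cn pc k_def by simp
      then have "(c,a) \<in> inversions n v" using sub by blast
      then have pvac: "inv v a < inv v c" using inv_mem[OF v] by simp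
      have "(c,b) \<in> inversions n v" using inv_mem[OF v] h cn \<open>c < a\<close> pvac by simp
      moreover have "(c,b) \<notin> inversions n u" using inv_mem[OF u] pc kb by simp
      moreover have "inv u b - inv u c < inv u b - inv u a" using pc k_def kb by simp
      ultimately show ?thesis using IH by blast
    qed
  qed
qed

lemma cover_exists:
  assumes u: "u \<in> Sn n" and v: "v \<in> Sn n" and sub: "inversions n u \<subseteq> inversions n v"
    and ne: "inversions n u \<noteq> inversions n v"
  shows "\<exists>i. 1 \<le> i \<and> i + 1 \<le> n \<and> u i < u (i+1) \<and> (u i, u (i+1)) \<in> inversions n v"
proof -
  obtain a b where "(a,b) \<in> inversions n v" "(a,b) \<notin> inversions n u" using sub ne by auto
  then show ?thesis using cover_step[OF u v sub] by blast
qed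


definition lam :: "nat \<Rightarrow> (nat \<Rightarrow> nat) \<Rightarrow> nat set" where
  "lam n w = {c\<in>{2..n-1}. (1,c) \<in> inversions n w}"

definition RS :: "nat \<Rightarrow> nat set set \<Rightarrow> ((nat \<Rightarrow> nat) \<times> (nat \<Rightarrow> nat)) set" where
  "RS n S = {(x,y). x \<in> Sn n \<and> y \<in> Sn n \<and> (x = y \<or> (lam n x \<in> S \<and>
      inversions n x - {(1,n)} = inversions n y - {(1,n)}))}"

lemma lam_eq: "inversions n x - {(1,n)} = inversions n y - {(1,n)} \<Longrightarrow> lam n x = lam n y"
proof -
  assume e: "inversions n x - {(1,n)} = inversions n y - {(1,n)}"
  have "(1,c) \<in> inversions n x \<longleftrightarrow> (1,c) \<in> inversions n y" if "c \<in> {2..n-1}" for c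
  proof -
    have "(1,c) \<noteq> (1,n)" using that by auto
    then show ?thesis using e by blast
  qed
  then show ?thesis unfolding lam_def by blast
qed

lemma core_join:
  assumes n3: "3 \<le> n" and x: "x \<in> Sn n" and y: "y \<in> Sn n" and z: "z \<in> Sn n"
    and iy: "inversions n y = insert (1,n) (inversions n x)" and nx: "(1,n) \<notin> inversions n x"
    and lx: "lam n x \<in> S" and jx: "is_join n x z j1" and jy: "is_join n y z j2"
  shows "(j1,j2) \<in> RS n S"
proof -
  have j1: "j1 \<in> Sn n" and j2: "j2 \<in> Sn n" using jx jy unfolding is_join_def by auto
  have x1: "inversions n x \<subseteq> inversions n j1" "inversions n z \<subseteq> inversions n j1"
    using jx unfolding is_join_def weak_le_def by auto
  have y2: "inversions n y \<subseteq> inversions n j2" "inversions n z \<subseteq> inversions n j2"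
    using jy unfolding is_join_def weak_le_def by auto
  have l1: "\<forall>w\<in>Sn n. inversions n x \<subseteq> inversions n w \<and> inversions n z \<subseteq> inversions n w \<longrightarrow> inversions n j1 \<subseteq> inversions n w"
    using jx unfolding is_join_def weak_le_def by auto
  have l2: "\<forall>w\<in>Sn n. inversions n y \<subseteq> inversions n w \<and> inversions n z \<subseteq> inversions n w \<longrightarrow> inversions n j2 \<subseteq> inversions n w"
    using jy unfolding is_join_def weak_le_def by auto
  have le12: "inversions n j1 \<subseteq> inversions n j2" using l1 j2 y2 iy by blast
  show ?thesis
  proof (cases "(1,n) \<in> inversions n j1")
    case True
    then have "inversions n y \<subseteq> inversions n j1" using x1 by (simp add: iy)
    then have "inversions n j2 \<subseteq> inversions n j1" using l2 j1 x1 by blast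
    then have "j1 = j2" using inversions_inj[OF j1 j2] le12 by blast
    then show ?thesis unfolding RS_def using j1 by simp
  next
    case False
    have n1: "1 < n" using n3 by simp
    have n1x: "inv x 1 < inv x n"
    proof -
      have "\<not> inv x n < inv x 1" using nx inv_mem[OF x] n1 by simp
      moreover have "inv x n \<noteq> inv x 1" using inv_inj[OF x, of n 1] n1 by auto
      ultimately show ?thesis by simp
    qed
    have nbx: "\<not> (inv x 1 < inv x c \<and> inv x c < inv x n)" if c: "c \<in> {1..n}" "c \<noteq> 1" "c \<noteq> n" for c
    proof
      assume bt: "inv x 1 < inv x c \<and> inv x c < inv x n"
      have "(1,c) \<notin> inversions n x" "(c,n) \<notin> inversions n x" using inv_mem[OF x] bt by auto
      moreover have "(1,c) \<noteq> (1,n)" "(c,n) \<noteq> (1,n)" using c by auto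
      ultimately have "(1,c) \<notin> inversions n y" "(c,n) \<notin> inversions n y" using iy by auto
      then have "\<not> inv y c < inv y 1" "\<not> inv y n < inv y c" using inv_mem[OF y] c by auto
      moreover have "(1,n) \<in> inversions n y" using iy by simp
      then have "inv y n < inv y 1" using inv_mem[OF y] by simp
      ultimately show False by simp
    qed
    have pj: "inv j1 1 < inv j1 n"
    proof -
      have "\<not> inv j1 n < inv j1 1" using False inv_mem[OF j1] n1 by simp
      moreover have "inv j1 n \<noteq> inv j1 1" using inv_inj[OF j1, of n 1] n1 by auto
      ultimately show ?thesis by simp
    qed
    have nbj: "\<not> (inv j1 1 < inv j1 c \<and> inv j1 c < inv j1 n)" if c: "c \<in> {1..n}" "c \<noteq> 1" "c \<noteq> n" for c
    proof
      assume bt: "inv j1 1 < inv j1 c \<and> inv j1 c < inv j1 n"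
      have d1: "inv x c \<noteq> inv x 1" "inv x c \<noteq> inv x n" using inv_inj[OF x, of c] c by auto
      have "inv x c < inv x 1 \<or> inv x n < inv x c" using nbx[OF c] d1 by linarith
      then show False
      proof
        assume "inv x c < inv x 1"
        then have "(1,c) \<in> inversions n x" using inv_mem[OF x] c by auto
        then have "(1,c) \<in> inversions n j1" using x1 by blast
        then have "inv j1 c < inv j1 1" using inv_mem[OF j1] by simp
        then show False using bt by simp
      next
        assume "inv x n < inv x c"
        then have "(c,n) \<in> inversions n x" using inv_mem[OF x] c by auto
        then have "(c,n) \<in> inversions n j1" using x1 by blast
        then have "inv j1 n < inv j1 c" using inv_mem[OF j1] by simp
        then show False using bt by simp
      qed
    qed
    define i where "i = inv j1 1"
    have i1: "1 \<le> i" using inv_in[OF j1, of 1] n1 unfolding i_def by auto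
    have ji: "j1 i = 1" unfolding i_def using w_inv[OF j1] .
    have inn: "i + 1 \<le> n" using pj inv_in[OF j1, of n] n1 unfolding i_def by auto
    have ji1: "j1 (i+1) = n"
    proof (rule ccontr)
      assume cn: "j1 (i+1) \<noteq> n"
      define c where "c = j1 (i+1)"
      have pc: "inv j1 c = i + 1" unfolding c_def using inv_w[OF j1] .
      have cin: "c \<in> {1..n}" unfolding c_def using w_in[OF j1] i1 inn by auto
      have c1: "c \<noteq> 1" using pc i_def by auto
      have "inv j1 c \<le> inv j1 n" using pc pj i_def by simp
      moreover have "inv j1 c \<noteq> inv j1 n" using inv_inj[OF j1, of c n] cn c_def by auto
      ultimately have "inv j1 1 < inv j1 c \<and> inv j1 c < inv j1 n" using pc i_def by simp
      then show False using nbj[OF cin c1] cn c_def by simp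
    qed
    define q where "q = j1 \<circ> sw i"
    have q: "q \<in> Sn n" unfolding q_def using sw_Sn[OF j1 i1 inn] .
    have iq: "inversions n q = insert (1,n) (inversions n j1)"
      unfolding q_def using asc_sw[OF j1 i1 inn] ji ji1 n1 by simp
    have "inversions n j2 \<subseteq> inversions n q" using l2 q iq iy x1 by blast
    then have dd: "inversions n j1 - {(1,n)} = inversions n j2 - {(1,n)}" using le12 iq by blast
    have "lam n j1 = lam n x"
    proof -
      have "(1,c) \<in> inversions n j1 \<longleftrightarrow> (1,c) \<in> inversions n x" if c: "c \<in> {2..n-1}" for c
      proof
        assume a: "(1,c) \<in> inversions n j1"
        show "(1,c) \<in> inversions n x"
        proof (rule ccontr)
          assume na: "(1,c) \<notin> inversions n x"
          have cc: "c \<in> {1..n}" "c \<noteq> 1" "c \<noteq> n" using c by auto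
          have "\<not> inv x c < inv x 1" using na inv_mem[OF x] c by auto
          moreover have "inv x c \<noteq> inv x 1" "inv x c \<noteq> inv x n" using inv_inj[OF x, of c] cc by auto
          ultimately have "inv x n < inv x c" using nbx[OF cc] by linarith
          then have "(c,n) \<in> inversions n x" using inv_mem[OF x] c by auto
          then have "(c,n) \<in> inversions n j1" using x1 by blast
          then have "inv j1 n < inv j1 c" using inv_mem[OF j1] by simp
          moreover have "inv j1 c < inv j1 1" using a inv_mem[OF j1] by simp
          ultimately show False using pj by simp
        qed
      next
        assume "(1,c) \<in> inversions n x"
        then show "(1,c) \<in> inversions n j1" using x1 by blast
      qed
      then show ?thesis unfolding lam_def by blast
    qed
    then show ?thesis unfolding RS_def using j1 j2 dd lx by simp
  qed
qed

lemma core_meet: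
  assumes n3: "3 \<le> n" and x: "x \<in> Sn n" and y: "y \<in> Sn n" and z: "z \<in> Sn n"
    and iy: "inversions n y = insert (1,n) (inversions n x)" and nx: "(1,n) \<notin> inversions n x"
    and lx: "lam n x \<in> S" and mx: "is_meet n x z m1" and my: "is_meet n y z m2"
  shows "(m1,m2) \<in> RS n S"
proof -
  have m1: "m1 \<in> Sn n" and m2: "m2 \<in> Sn n" using mx my unfolding is_meet_def by auto
  have x1: "inversions n m1 \<subseteq> inversions n x" "inversions n m1 \<subseteq> inversions n z"
    using mx unfolding is_meet_def weak_le_def by auto
  have y2: "inversions n m2 \<subseteq> inversions n y" "inversions n m2 \<subseteq> inversions n z"
    using my unfolding is_meet_def weak_le_def by auto
  have l1: "\<forall>w\<in>Sn n. inversions n w \<subseteq> inversions n x \<and> inversions n w \<subseteq> inversions n z \<longrightarrow> inversions n w \<subseteq> inversions n m1"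
    using mx unfolding is_meet_def weak_le_def by auto
  have l2: "\<forall>w\<in>Sn n. inversions n w \<subseteq> inversions n y \<and> inversions n w \<subseteq> inversions n z \<longrightarrow> inversions n w \<subseteq> inversions n m2"
    using my unfolding is_meet_def weak_le_def by auto
  have xy: "inversions n x \<subseteq> inversions n y" using iy by auto
  have le12: "inversions n m1 \<subseteq> inversions n m2" using l2 m1 x1 xy by blast
  have ymx: "inversions n y - {(1,n)} = inversions n x" using iy nx by auto
  show ?thesis
  proof (cases "(1,n) \<in> inversions n m2")
    case False
    then have "inversions n m2 \<subseteq> inversions n x" using y2 ymx by blast
    then have "inversions n m2 \<subseteq> inversions n m1" using l1 m2 y2 by blast
    then have "m1 = m2" using inversions_inj[OF m1 m2] le12 by blast
    then show ?thesis unfolding RS_def using m1 by simp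
  next
    case True
    have n1: "1 < n" using n3 by simp
    have ny: "(1,n) \<in> inversions n y" using iy by simp
    have nby: "\<not> (inv y n < inv y c \<and> inv y c < inv y 1)" if c: "c \<in> {1..n}" "c \<noteq> 1" "c \<noteq> n" for c
    proof
      assume bt: "inv y n < inv y c \<and> inv y c < inv y 1"
      have "(1,c) \<in> inversions n y" "(c,n) \<in> inversions n y" using inv_mem[OF y] bt c by auto
      moreover have "(1,c) \<noteq> (1,n)" "(c,n) \<noteq> (1,n)" using c by auto
      ultimately have "(1,c) \<in> inversions n x" "(c,n) \<in> inversions n x" using iy by auto
      then have "inv x c < inv x 1" "inv x n < inv x c" using inv_mem[OF x] by auto
      then have "(1,n) \<in> inversions n x" using inv_mem[OF x] n1 by simp
      then show False using nx by simp
    qed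
    have pm: "inv m2 n < inv m2 1" using True inv_mem[OF m2] by simp
    have nbm: "\<not> (inv m2 n < inv m2 c \<and> inv m2 c < inv m2 1)" if c: "c \<in> {1..n}" "c \<noteq> 1" "c \<noteq> n" for c
    proof
      assume bt: "inv m2 n < inv m2 c \<and> inv m2 c < inv m2 1"
      have "(1,c) \<in> inversions n m2" "(c,n) \<in> inversions n m2" using inv_mem[OF m2] bt c by auto
      then have "(1,c) \<in> inversions n y" "(c,n) \<in> inversions n y" using y2 by auto
      then have "inv y c < inv y 1" "inv y n < inv y c" using inv_mem[OF y] by auto
      then show False using nby[OF c] by simp
    qed
    define i where "i = inv m2 n"
    have i1: "1 \<le> i" using inv_in[OF m2, of n] n1 unfolding i_def by auto
    have mi: "m2 i = n" unfolding i_def using w_inv[OF m2] .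
    have inn: "i + 1 \<le> n" using pm inv_in[OF m2, of 1] n1 unfolding i_def by auto
    have mi1: "m2 (i+1) = 1"
    proof (rule ccontr)
      assume cn: "m2 (i+1) \<noteq> 1"
      define c where "c = m2 (i+1)"
      have pc: "inv m2 c = i + 1" unfolding c_def using inv_w[OF m2] .
      have cin: "c \<in> {1..n}" unfolding c_def using w_in[OF m2] i1 inn by auto
      have c1: "c \<noteq> n" using pc i_def by auto
      have "inv m2 c \<le> inv m2 1" using pc pm i_def by simp
      moreover have "inv m2 c \<noteq> inv m2 1" using inv_inj[OF m2, of c 1] cn c_def by auto
      ultimately have "inv m2 n < inv m2 c \<and> inv m2 c < inv m2 1" using pc i_def by simp
      then show False using nbm[OF cin _ c1] cn c_def by simp
    qed
    define q where "q = m2 \<circ> sw i"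
    have q: "q \<in> Sn n" unfolding q_def using sw_Sn[OF m2 i1 inn] .
    have iq: "inversions n q = inversions n m2 - {(1,n)}"
      unfolding q_def using desc_sw[OF m2 i1 inn] mi mi1 n1 by simp
    have "inversions n q \<subseteq> inversions n x" using iq y2 ymx by blast
    moreover have "inversions n q \<subseteq> inversions n z" using iq y2 by blast
    ultimately have "inversions n q \<subseteq> inversions n m1" using l1 q by blast
    then have dd: "inversions n m1 - {(1,n)} = inversions n m2 - {(1,n)}" using le12 iq by blast
    have "lam n m2 = lam n y"
    proof -
      have "(1,c) \<in> inversions n m2 \<longleftrightarrow> (1,c) \<in> inversions n y" if c: "c \<in> {2..n-1}" for c
      proof
        assume "(1,c) \<in> inversions n m2"
        then show "(1,c) \<in> inversions n y" using y2 by blast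
      next
        assume a: "(1,c) \<in> inversions n y"
        have cc: "c \<in> {1..n}" "c \<noteq> 1" "c \<noteq> n" using c by auto
        have "inv y c < inv y 1" using a inv_mem[OF y] by simp
        moreover have "inv y c \<noteq> inv y n" using inv_inj[OF y, of c n] cc by auto
        ultimately have "inv y c < inv y n" using nby[OF cc] by linarith
        then have "(c,n) \<notin> inversions n y" using inv_mem[OF y] by simp
        then have "(c,n) \<notin> inversions n m2" using y2 by blast
        then have "\<not> inv m2 n < inv m2 c" using inv_mem[OF m2] c by auto
        moreover have "inv m2 c \<noteq> inv m2 n" using inv_inj[OF m2, of c n] cc by auto
        ultimately have "inv m2 c < inv m2 1" using pm by linarith
        then show "(1,c) \<in> inversions n m2" using inv_mem[OF m2] c by auto
      qed
      then show ?thesis unfolding lam_def by blast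
    qed
    moreover have "inversions n y - {(1,n)} = inversions n x - {(1,n)}" using ymx nx by blast
    then have "lam n y = lam n x" by (rule lam_eq)
    moreover have "lam n m1 = lam n m2" using lam_eq[OF dd] .
    ultimately show ?thesis unfolding RS_def using m1 m2 dd lx by simp
  qed
qed


lemma RS_sym: "(x,y) \<in> RS n S \<Longrightarrow> (y,x) \<in> RS n S"
proof -
  assume h: "(x,y) \<in> RS n S"
  then have xy: "x \<in> Sn n" "y \<in> Sn n" unfolding RS_def by auto
  show ?thesis
  proof (cases "x = y")
    case True then show ?thesis using h by simp
  next
    case False
    then have "lam n x \<in> S" "inversions n x - {(1,n)} = inversions n y - {(1,n)}"
      using h unfolding RS_def by auto
    moreover then have "lam n y = lam n x" using lam_eq by metis
    ultimately show ?thesis unfolding RS_def using xy by simp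
  qed
qed

lemma RS_equiv: "equiv (Sn n) (RS n S)"
proof (rule equivI)
  show "RS n S \<subseteq> Sn n \<times> Sn n" unfolding RS_def by auto
  show "refl_on (Sn n) (RS n S)" unfolding refl_on_def RS_def by auto
  show "sym (RS n S)" using RS_sym by (metis symI)
  show "trans (RS n S)"
  proof (rule transI)
    fix x y z assume a: "(x,y) \<in> RS n S" and b: "(y,z) \<in> RS n S"
    show "(x,z) \<in> RS n S"
    proof (cases "x = y")
      case True then show ?thesis using b by simp
    next
      case False
      show ?thesis
      proof (cases "y = z")
        case True then show ?thesis using a by simp
      next
        case False
        then show ?thesis using a b \<open>x \<noteq> y\<close> unfolding RS_def by auto
      qed
    qed
  qed
qed

lemma RS_cong:
  assumes n3: "3 \<le> n" shows "lattice_congruence n (RS n S)"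
  unfolding lattice_congruence_def
proof (intro conjI ballI impI allI)
  show "equiv (Sn n) (RS n S)" by (rule RS_equiv)
  fix x y z assume x: "x \<in> Sn n" and y: "y \<in> Sn n" and z: "z \<in> Sn n" and xy: "(x,y) \<in> RS n S"
  {
    fix j1 j2 assume jj: "is_join n x z j1 \<and> is_join n y z j2"
    show "(j1,j2) \<in> RS n S"
    proof (cases "x = y")
      case True
      then have "j1 = j2" using jj join_unique by blast
      moreover have "j1 \<in> Sn n" using jj unfolding is_join_def by blast
      ultimately show ?thesis unfolding RS_def by simp
    next
      case False
      then have lx: "lam n x \<in> S" and d: "inversions n x - {(1,n)} = inversions n y - {(1,n)}"
        using xy unfolding RS_def by auto
      have ne: "inversions n x \<noteq> inversions n y" using inversions_inj[OF x y] False by blast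
      show ?thesis
      proof (cases "(1,n) \<in> inversions n x")
        case False
        then have "inversions n y = insert (1,n) (inversions n x)" using d ne by blast
        then show ?thesis using core_join[OF n3 x y z _ False lx] jj by blast
      next
        case True
        then have "(1,n) \<notin> inversions n y" using d ne by blast
        moreover have "inversions n x = insert (1,n) (inversions n y)" using d ne True by blast
        moreover have "lam n y \<in> S" using lam_eq[OF d] lx by simp
        ultimately have "(j2,j1) \<in> RS n S" using core_join[OF n3 y x z] jj by blast
        then show ?thesis by (rule RS_sym)
      qed
    qed
  }
  {
    fix j1 j2 assume jj: "is_meet n x z j1 \<and> is_meet n y z j2"
    show "(j1,j2) \<in> RS n S"
    proof (cases "x = y")
      case True
      then have "j1 = j2" using jj meet_unique by blast
      moreover have "j1 \<in> Sn n" using jj unfolding is_meet_def by blast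
      ultimately show ?thesis unfolding RS_def by simp
    next
      case False
      then have lx: "lam n x \<in> S" and d: "inversions n x - {(1,n)} = inversions n y - {(1,n)}"
        using xy unfolding RS_def by auto
      have ne: "inversions n x \<noteq> inversions n y" using inversions_inj[OF x y] False by blast
      show ?thesis
      proof (cases "(1,n) \<in> inversions n x")
        case False
        then have "inversions n y = insert (1,n) (inversions n x)" using d ne by blast
        then show ?thesis using core_meet[OF n3 x y z _ False lx] jj by blast
      next
        case True
        then have "(1,n) \<notin> inversions n y" using d ne by blast
        moreover have "inversions n x = insert (1,n) (inversions n y)" using d ne True by blast
        moreover have "lam n y \<in> S" using lam_eq[OF d] lx by simp
        ultimately have "(j2,j1) \<in> RS n S" using core_meet[OF n3 y x z] jj by blast
        then show ?thesis by (rule RS_sym)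
      qed
    qed
  }
qed

lemma id_Sn: "id \<in> Sn n" unfolding Sn_def by simp

lemma inv_id_empty: "inversions n id = {}"
  using inv_mem[OF id_Sn] by (auto simp: inv_id)

lemma inv_sw_id: "1 \<le> a \<Longrightarrow> a + 1 \<le> n \<Longrightarrow> inversions n (id \<circ> sw a) = {(a, a+1)}"
  using asc_sw[OF id_Sn, of a n] inv_id_empty by simp

lemma edge_id:
  assumes "1 \<le> a" "a + 1 \<le> n"
  shows "(id, id \<circ> sw a) \<in> fence_edges n a (a+1) {}"
  unfolding fence_edges_def using assms id_Sn by auto

lemma RS_essential:
  assumes n3: "3 \<le> n" shows "essential n (RS n S)"
  unfolding essential_def
proof (intro allI impI)
  fix a assume a: "1 \<le> a \<and> a + 1 \<le> n"
  have e: "(id, id \<circ> sw a) \<in> fence_edges n a (a+1) {}" using edge_id a by blast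
  have ne: "id \<noteq> id \<circ> sw a"
  proof
    assume "id = id \<circ> sw a"
    then have "id a = (id \<circ> sw a) a" by simp
    then show False by simp
  qed
  have "(a, a+1) \<noteq> (1,n)" using a n3 by auto
  then have "inversions n id - {(1,n)} \<noteq> inversions n (id \<circ> sw a) - {(1,n)}"
    using inv_id_empty inv_sw_id a by auto
  then have "(id, id \<circ> sw a) \<notin> RS n S" unfolding RS_def using ne by auto
  then show "\<not> fence_in_FR n (RS n S) a (a + 1) {}" unfolding fence_in_FR_def using e by blast
qed


lemma tcot_key: "tcot n {(a,b). 1 \<le> a \<and> a < b \<and> b \<le> n \<and> key b < (key a :: nat)}"
  unfolding tcot_def Pairs_def by auto

lemma witness:
  assumes n3: "3 \<le> n" and L: "L \<subseteq> {2..n-1}"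
  shows "\<exists>x y. x \<in> Sn n \<and> y \<in> Sn n \<and> x \<noteq> y \<and> lam n x = L \<and>
     inversions n x - {(1,n)} = inversions n y - {(1,n)}"
proof -
  define kx where "kx c = (if c = 1 then n+1 else if c = n then n+2 else if c \<in> L then c else 2*n + c)" for c
  define ky where "ky c = (if c = 1 then n+2 else if c = n then n+1 else if c \<in> L then c else 2*n + c)" for c
  obtain x where x: "x \<in> Sn n" "inversions n x = {(a,b). 1 \<le> a \<and> a < b \<and> b \<le> n \<and> kx b < kx a}"
    using realize[OF tcot_key] by blast
  obtain y where y: "y \<in> Sn n" "inversions n y = {(a,b). 1 \<le> a \<and> a < b \<and> b \<le> n \<and> ky b < ky a}"
    using realize[OF tcot_key] by blast
  have Lb: "c \<le> n - 1" "2 \<le> c" if "c \<in> L" for c using L that by auto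
  have "(1,n) \<in> inversions n y" "(1,n) \<notin> inversions n x" using x y n3 unfolding kx_def ky_def by auto
  then have xy: "x \<noteq> y" by auto
  have lx: "lam n x = L"
  proof -
    have "(1,c) \<in> inversions n x \<longleftrightarrow> c \<in> L" if c: "c \<in> {2..n-1}" for c
    proof -
      have "c \<noteq> 1" "c \<noteq> n" using c by auto
      have k1: "kx 1 = n + 1" unfolding kx_def by simp
      have "(1,c) \<in> inversions n x \<longleftrightarrow> kx c < kx 1" using c by (auto simp add: x(2))
      then have "(1,c) \<in> inversions n x \<longleftrightarrow> kx c < n + 1" using k1 by simp
      also have "\<dots> \<longleftrightarrow> c \<in> L" using \<open>c \<noteq> 1\<close> \<open>c \<noteq> n\<close> c unfolding kx_def by auto
      finally show ?thesis .
    qed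
    then show ?thesis unfolding lam_def using L by blast
  qed
  have d: "inversions n x - {(1,n)} = inversions n y - {(1,n)}"
  proof -
    have kk: "kx b < kx a \<longleftrightarrow> ky b < ky a" if ab: "1 \<le> a" "a < b" "b \<le> n" "(a,b) \<noteq> (1,n)" for a b
    proof (cases "a = 1")
      case True
      then have bn: "b \<noteq> n" "b \<noteq> 1" using ab by auto
      have "kx b = ky b" unfolding kx_def ky_def using bn by simp
      moreover have "kx b \<le> n - 1 \<or> kx b \<ge> 2*n + 2" unfolding kx_def using bn Lb ab by auto
      ultimately show ?thesis using True unfolding kx_def ky_def using n3 by auto
    next
      case False
      show ?thesis
      proof (cases "b = n")
        case True
        then have an: "a \<noteq> n" "a \<noteq> 1" using ab False by auto
        have "kx a = ky a" unfolding kx_def ky_def using an by simp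
        moreover have "kx a \<le> n - 1 \<or> kx a \<ge> 2*n + 2" unfolding kx_def using an Lb ab by auto
        ultimately show ?thesis using True unfolding kx_def ky_def using n3 by auto
      next
        case False
        then have "kx a = ky a" "kx b = ky b" unfolding kx_def ky_def using \<open>a \<noteq> 1\<close> ab by auto
        then show ?thesis by simp
      qed
    qed
    show ?thesis
    proof (rule set_eqI)
      fix p :: "nat \<times> nat" obtain a b where p: "p = (a,b)" by (cases p)
      show "p \<in> inversions n x - {(1,n)} \<longleftrightarrow> p \<in> inversions n y - {(1,n)}"
        unfolding p x(2) y(2)
        by (cases "1 \<le> a \<and> a < b \<and> b \<le> n \<and> (a,b) \<noteq> (1,n)") (use kk[of a b] in auto)
    qed
  qed
  show ?thesis using x y xy lx d by blast
qed

lemma RS_inj: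
  assumes n3: "3 \<le> n" shows "inj_on (RS n) (Pow (Pow {2..n-1}))"
proof (rule inj_onI)
  fix S1 S2 assume S1: "S1 \<in> Pow (Pow {2..n-1})" and S2: "S2 \<in> Pow (Pow {2..n-1})" and e: "RS n S1 = RS n S2"
  have key: "L \<in> S1 \<longleftrightarrow> L \<in> S2" if L: "L \<subseteq> {2..n-1}" for L
  proof -
    obtain x y where w: "x \<in> Sn n" "y \<in> Sn n" "x \<noteq> y" "lam n x = L"
      "inversions n x - {(1,n)} = inversions n y - {(1,n)}" using witness[OF n3 L] by blast
    have "(x,y) \<in> RS n S \<longleftrightarrow> L \<in> S" for S unfolding RS_def using w by auto
    then show ?thesis using e by metis
  qed
  show "S1 = S2"
  proof (rule set_eqI)
    fix L show "L \<in> S1 \<longleftrightarrow> L \<in> S2"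
    proof (cases "L \<subseteq> {2..n-1}")
      case True then show ?thesis using key by blast
    next
      case False
      then have "L \<notin> S1" "L \<notin> S2" using S1 S2 by auto
      then show ?thesis by simp
    qed
  qed
qed

lemma finite_Sn: "finite (Sn n)" unfolding Sn_def using finite_permutations by blast

lemma finite_ess: "finite (essential_congruences n)"
proof -
  have "essential_congruences n \<subseteq> Pow (Sn n \<times> Sn n)"
    unfolding essential_congruences_def lattice_congruence_def using equiv_type by blast
  then show ?thesis using finite_Sn by (meson finite_Pow_iff finite_SigmaI finite_subset)
qed

lemma lower_bound:
  assumes n3: "3 \<le> n" shows "2 ^ (2 ^ (n - 2)) \<le> card (essential_congruences n)"
proof -
  have sub: "RS n ` Pow (Pow {2..n-1}) \<subseteq> essential_congruences n"
    unfolding essential_congruences_def using RS_cong[OF n3] RS_essential[OF n3] by blast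
  have "card (Pow (Pow {2..n-1::nat})) = 2 ^ (2 ^ (n - 2))"
  proof -
    have "card {2..n-1::nat} = n - 2" using n3 by simp
    then show ?thesis by (simp add: card_Pow)
  qed
  moreover have "card (RS n ` Pow (Pow {2..n-1})) = card (Pow (Pow {2..n-1::nat}))"
    using card_image[OF RS_inj[OF n3]] .
  moreover have "card (RS n ` Pow (Pow {2..n-1})) \<le> card (essential_congruences n)"
    using card_mono[OF finite_ess sub] .
  ultimately show ?thesis by simp
qed


definition desc :: "nat \<Rightarrow> (nat \<Rightarrow> nat) \<Rightarrow> nat \<Rightarrow> bool" where
  "desc n w k \<longleftrightarrow> 1 \<le> k \<and> k + 1 \<le> n \<and> w (k+1) < w k"

definition one_desc :: "nat \<Rightarrow> (nat \<Rightarrow> nat) \<Rightarrow> nat \<Rightarrow> bool" where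
  "one_desc n j k \<longleftrightarrow> j \<in> Sn n \<and> desc n j k \<and> (\<forall>k'. desc n j k' \<longrightarrow> k' = k)"

definition Kset :: "nat \<Rightarrow> ((nat \<Rightarrow> nat) \<times> (nat \<Rightarrow> nat)) set \<Rightarrow> (nat \<Rightarrow> nat) set" where
  "Kset n R = {j. \<exists>k. one_desc n j k \<and> (j \<circ> sw k, j) \<in> R}"

lemma finite_inv: "finite (inversions n w)"
proof -
  have "inversions n w \<subseteq> {1..n} \<times> {1..n}" unfolding inversions_def by auto
  then show ?thesis by (rule finite_subset) simp
qed

lemma desc_pair_in:
  assumes j: "j \<in> Sn n" and d: "desc n j k"
  shows "(j (k+1), j k) \<in> inversions n j"
proof -
  have k: "1 \<le> k" "k + 1 \<le> n" "j (k+1) < j k" using d unfolding desc_def by auto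
  have "j (k+1) \<in> {1..n}" "j k \<in> {1..n}" using w_in[OF j] k by auto
  then show ?thesis using inv_mem[OF j] inv_w[OF j] k by simp
qed

lemma JI_witness:
  assumes u: "u \<in> Sn n" and i: "1 \<le> i" "i + 1 \<le> n" and asc: "u i < u (i+1)"
  shows "\<exists>j k. one_desc n j k \<and> is_join n (j \<circ> sw k) u u \<and> is_join n j u (u \<circ> sw i)
     \<and> is_meet n u j (j \<circ> sw k) \<and> is_meet n (u \<circ> sw i) j j"
proof -
  define v where "v = u \<circ> sw i"
  define p where "p = (u i, u (i+1))"
  have v: "v \<in> Sn n" unfolding v_def using sw_Sn[OF u i] .
  have iv: "inversions n v = insert p (inversions n u)" unfolding v_def p_def using asc_sw[OF u i asc] .
  have pu: "p \<notin> inversions n u" unfolding p_def using inv_mem[OF u] inv_w[OF u] by simp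
  define W where "W = {w\<in>Sn n. inversions n w \<subseteq> inversions n v \<and> \<not> inversions n w \<subseteq> inversions n u}"
  have vW: "v \<in> W" unfolding W_def using v iv pu by auto
  define m where "m = (LEAST m. \<exists>w\<in>W. card (inversions n w) = m)"
  have "\<exists>w\<in>W. card (inversions n w) = m" unfolding m_def by (rule LeastI_ex) (use vW in blast)
  then obtain j where jW: "j \<in> W" and jm: "card (inversions n j) = m" by blast
  have minj: "card (inversions n j) \<le> card (inversions n w)" if "w \<in> W" for w
    unfolding jm m_def using that by (intro Least_le) blast
  have j: "j \<in> Sn n" and jv: "inversions n j \<subseteq> inversions n v" and ju: "\<not> inversions n j \<subseteq> inversions n u"
    using jW unfolding W_def by auto
  have pj: "p \<in> inversions n j" using jv ju unfolding iv by blast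
  have low: "inversions n (j \<circ> sw k) \<subseteq> inversions n u" if dk: "desc n j k" for k
  proof -
    have k: "1 \<le> k" "k + 1 \<le> n" "j (k+1) < j k" using dk unfolding desc_def by auto
    have e: "inversions n (j \<circ> sw k) = inversions n j - {(j (k+1), j k)}" using desc_sw[OF j k] .
    have jk: "j \<circ> sw k \<in> Sn n" using sw_Sn[OF j k(1,2)] .
    have "card (inversions n (j \<circ> sw k)) < card (inversions n j)"
      unfolding e using desc_pair_in[OF j dk] finite_inv by (meson card_Diff1_less)
    then have "j \<circ> sw k \<notin> W" using minj by fastforce
    moreover have "inversions n (j \<circ> sw k) \<subseteq> inversions n v" using jv unfolding e by blast
    ultimately show ?thesis unfolding W_def using jk by blast
  qed
  obtain k where dk: "desc n j k"
    using has_descent[OF j] pj unfolding desc_def by blast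
  have uniq: "k' = k" if dk': "desc n j k'" for k'
  proof (rule ccontr)
    assume ne: "k' \<noteq> k"
    have "(j (k+1), j k) \<noteq> (j (k'+1), j k')" using w_inj[OF j, of k k'] ne by auto
    moreover have "inversions n (j \<circ> sw k) = inversions n j - {(j (k+1), j k)}"
      using desc_sw[OF j] dk unfolding desc_def by blast
    moreover have "inversions n (j \<circ> sw k') = inversions n j - {(j (k'+1), j k')}"
      using desc_sw[OF j] dk' unfolding desc_def by blast
    ultimately have "inversions n j \<subseteq> inversions n (j \<circ> sw k) \<union> inversions n (j \<circ> sw k')"
      by blast
    then show False using low[OF dk] low[OF dk'] ju by blast
  qed
  have od: "one_desc n j k" unfolding one_desc_def using j dk uniq by blast
  define js where "js = j \<circ> sw k"
  have k: "1 \<le> k" "k + 1 \<le> n" "j (k+1) < j k" using dk unfolding desc_def by auto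
  have js: "js \<in> Sn n" unfolding js_def using sw_Sn[OF j k(1,2)] .
  have ejs: "inversions n js = inversions n j - {(j (k+1), j k)}" unfolding js_def using desc_sw[OF j k] .
  have lowu: "inversions n js \<subseteq> inversions n u" unfolding js_def using low[OF dk] .
  have qp: "(j (k+1), j k) = p"
  proof (rule ccontr)
    assume "(j (k+1), j k) \<noteq> p"
    have "(j (k+1), j k) \<notin> inversions n u"
    proof
      assume "(j (k+1), j k) \<in> inversions n u"
      then have "inversions n j \<subseteq> inversions n u" using lowu unfolding ejs by blast
      then show False using ju by blast
    qed
    moreover have "(j (k+1), j k) \<in> inversions n v" using jv desc_pair_in[OF j dk] by blast
    ultimately show False using \<open>(j (k+1), j k) \<noteq> p\<close> unfolding iv by blast
  qed
  have ejs2: "inversions n js = inversions n j - {p}" using ejs qp by simp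
  have J1: "is_join n js u u" unfolding is_join_def weak_le_def using u lowu by blast
  have J2: "is_join n j u v" unfolding is_join_def weak_le_def
  proof (intro conjI ballI impI)
    show "v \<in> Sn n" using v .
    show "inversions n j \<subseteq> inversions n v" using jv .
    show "inversions n u \<subseteq> inversions n v" unfolding iv by blast
    fix z assume "z \<in> Sn n" "inversions n j \<subseteq> inversions n z \<and> inversions n u \<subseteq> inversions n z"
    then show "inversions n v \<subseteq> inversions n z" using pj unfolding iv by blast
  qed
  have M1: "is_meet n u j js" unfolding is_meet_def weak_le_def
  proof (intro conjI ballI impI)
    show "js \<in> Sn n" using js .
    show "inversions n js \<subseteq> inversions n u" using lowu .
    show "inversions n js \<subseteq> inversions n j" unfolding ejs by blast
    fix z assume "z \<in> Sn n" "inversions n z \<subseteq> inversions n u \<and> inversions n z \<subseteq> inversions n j"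
    then show "inversions n z \<subseteq> inversions n js" using pu unfolding ejs2 by blast
  qed
  have M2: "is_meet n v j j" unfolding is_meet_def weak_le_def using j jv by blast
  show ?thesis using od J1 J2 M1 M2 unfolding js_def v_def by blast
qed


lemma cj: "lattice_congruence n R \<Longrightarrow> x \<in> Sn n \<Longrightarrow> y \<in> Sn n \<Longrightarrow> z \<in> Sn n \<Longrightarrow> (x,y) \<in> R
  \<Longrightarrow> is_join n x z j1 \<Longrightarrow> is_join n y z j2 \<Longrightarrow> (j1,j2) \<in> R"
  unfolding lattice_congruence_def by blast

lemma cm: "lattice_congruence n R \<Longrightarrow> x \<in> Sn n \<Longrightarrow> y \<in> Sn n \<Longrightarrow> z \<in> Sn n \<Longrightarrow> (x,y) \<in> R
  \<Longrightarrow> is_meet n x z j1 \<Longrightarrow> is_meet n y z j2 \<Longrightarrow> (j1,j2) \<in> R"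
  unfolding lattice_congruence_def by blast

lemma ceq: "lattice_congruence n R \<Longrightarrow> equiv (Sn n) R"
  unfolding lattice_congruence_def by blast

lemma c_in: "lattice_congruence n R \<Longrightarrow> (x,y) \<in> R \<Longrightarrow> x \<in> Sn n \<and> y \<in> Sn n"
  using ceq equiv_type by blast

lemma c_refl: "lattice_congruence n R \<Longrightarrow> x \<in> Sn n \<Longrightarrow> (x,x) \<in> R"
  using ceq unfolding equiv_def refl_on_def by blast

lemma c_sym: "lattice_congruence n R \<Longrightarrow> (x,y) \<in> R \<Longrightarrow> (y,x) \<in> R"
  using ceq unfolding equiv_def by (meson symD)

lemma c_trans: "lattice_congruence n R \<Longrightarrow> (x,y) \<in> R \<Longrightarrow> (y,z) \<in> R \<Longrightarrow> (x,z) \<in> R"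
  using ceq unfolding equiv_def by (meson transD)

lemma join_le: "x \<in> Sn n \<Longrightarrow> y \<in> Sn n \<Longrightarrow> inversions n x \<subseteq> inversions n y \<Longrightarrow> is_join n x y y"
  unfolding is_join_def weak_le_def by blast

lemma join_ge: "x \<in> Sn n \<Longrightarrow> y \<in> Sn n \<Longrightarrow> inversions n y \<subseteq> inversions n x \<Longrightarrow> is_join n x y x"
  unfolding is_join_def weak_le_def by blast

lemma meet_self: "x \<in> Sn n \<Longrightarrow> is_meet n x x x"
  unfolding is_meet_def weak_le_def by blast

lemma join_self: "x \<in> Sn n \<Longrightarrow> is_join n x x x"
  unfolding is_join_def weak_le_def by blast

lemma cover_transfer:
  assumes R1: "lattice_congruence n R1" and R2: "lattice_congruence n R2"
    and K: "Kset n R1 \<subseteq> Kset n R2"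
    and u: "u \<in> Sn n" and i: "1 \<le> i" "i + 1 \<le> n" and asc: "u i < u (i+1)"
    and h: "(u, u \<circ> sw i) \<in> R1"
  shows "(u, u \<circ> sw i) \<in> R2"
proof -
  obtain j k where od: "one_desc n j k" and J1: "is_join n (j \<circ> sw k) u u"
    and J2: "is_join n j u (u \<circ> sw i)" and M1: "is_meet n u j (j \<circ> sw k)" and M2: "is_meet n (u \<circ> sw i) j j"
    using JI_witness[OF u i asc] by blast
  have j: "j \<in> Sn n" using od unfolding one_desc_def by blast
  have dk: "1 \<le> k" "k + 1 \<le> n" using od unfolding one_desc_def desc_def by auto
  have js: "j \<circ> sw k \<in> Sn n" using sw_Sn[OF j dk] .
  have v: "u \<circ> sw i \<in> Sn n" using sw_Sn[OF u i] .
  have "(j \<circ> sw k, j) \<in> R1" using cm[OF R1 u v j h M1 M2] .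
  then have "j \<in> Kset n R1" unfolding Kset_def using od by blast
  then have "j \<in> Kset n R2" using K by blast
  then obtain k' where od': "one_desc n j k'" and r2: "(j \<circ> sw k', j) \<in> R2" unfolding Kset_def by blast
  have "k' = k" using od od' unfolding one_desc_def by blast
  then have "(j \<circ> sw k, j) \<in> R2" using r2 by simp
  then show ?thesis using cj[OF R2 js j u _ J1 J2] by blast
qed

lemma interval:
  assumes R: "lattice_congruence n R" and u: "u \<in> Sn n" and v: "v \<in> Sn n" and w: "w \<in> Sn n"
    and uw: "inversions n u \<subseteq> inversions n w" and wv: "inversions n w \<subseteq> inversions n v"
    and h: "(u,v) \<in> R"
  shows "(w,v) \<in> R"
  using cj[OF R u v w h join_le[OF u w uw] join_ge[OF v w wv]] .

lemma chain:
  assumes R1: "lattice_congruence n R1" and R2: "lattice_congruence n R2"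
    and K: "Kset n R1 \<subseteq> Kset n R2"
  shows "u \<in> Sn n \<Longrightarrow> v \<in> Sn n \<Longrightarrow> inversions n u \<subseteq> inversions n v \<Longrightarrow> (u,v) \<in> R1 \<Longrightarrow> (u,v) \<in> R2"
proof (induction "card (inversions n v - inversions n u)" arbitrary: u rule: less_induct)
  case less
  show ?case
  proof (cases "inversions n u = inversions n v")
    case True
    then have "u = v" using inversions_inj less.prems by blast
    then show ?thesis using c_refl[OF R2] less.prems by simp
  next
    case False
    obtain i where i: "1 \<le> i" "i + 1 \<le> n" "u i < u (i+1)" and pv: "(u i, u (i+1)) \<in> inversions n v"
      using cover_exists[OF less.prems(1,2,3) False] by blast
    define w where "w = u \<circ> sw i"
    have w: "w \<in> Sn n" unfolding w_def using sw_Sn less.prems(1) i by blast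
    have iw: "inversions n w = insert (u i, u (i+1)) (inversions n u)"
      unfolding w_def using asc_sw less.prems(1) i by blast
    have pu: "(u i, u (i+1)) \<notin> inversions n u" using inv_mem[OF less.prems(1)] inv_w[OF less.prems(1)] by simp
    have uw: "inversions n u \<subseteq> inversions n w" unfolding iw by blast
    have wv: "inversions n w \<subseteq> inversions n v" unfolding iw using pv less.prems(3) by blast
    have r1: "(w,v) \<in> R1" using interval[OF R1 less.prems(1,2) w uw wv less.prems(4)] .
    have "(u,w) \<in> R1" using c_trans[OF R1 less.prems(4) c_sym[OF R1 r1]] .
    then have uw2: "(u,w) \<in> R2" using cover_transfer[OF R1 R2 K less.prems(1) i] unfolding w_def by blast
    have "card (inversions n v - inversions n w) < card (inversions n v - inversions n u)"
    proof (rule psubset_card_mono)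
      show "finite (inversions n v - inversions n u)" using finite_inv by blast
      show "inversions n v - inversions n w \<subset> inversions n v - inversions n u"
        using pv pu uw unfolding iw by blast
    qed
    then have "(w,v) \<in> R2" using less.hyps w less.prems(2) wv r1 by blast
    then show ?thesis using c_trans[OF R2 uw2] by blast
  qed
qed

lemma K_sub:
  assumes R1: "lattice_congruence n R1" and R2: "lattice_congruence n R2"
    and K: "Kset n R1 \<subseteq> Kset n R2"
  shows "R1 \<subseteq> R2"
proof
  fix p assume pR: "p \<in> R1"
  obtain x y where p: "p = (x,y)" by (cases p)
  have xy: "(x,y) \<in> R1" using pR p by simp
  have x: "x \<in> Sn n" and y: "y \<in> Sn n" using c_in[OF R1 xy] by auto
  define m where "m = meetw n y x"
  define J where "J = joinw n x y"
  have M: "is_meet n y x m" unfolding m_def using meet_exists[OF y x] .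
  have JJ: "is_join n x y J" unfolding J_def using join_exists[OF x y] .
  have m: "m \<in> Sn n" using M unfolding is_meet_def by blast
  have Jn: "J \<in> Sn n" using JJ unfolding is_join_def by blast
  have "(x,m) \<in> R1" using cm[OF R1 x y x xy meet_self[OF x] M] .
  moreover have "(J,y) \<in> R1" using cj[OF R1 x y y xy JJ join_self[OF y]] .
  ultimately have mJ: "(m,J) \<in> R1" using xy c_trans[OF R1] c_sym[OF R1] by metis
  have mx: "inversions n m \<subseteq> inversions n x" "inversions n m \<subseteq> inversions n y"
    using M unfolding is_meet_def weak_le_def by auto
  have xJ: "inversions n x \<subseteq> inversions n J" "inversions n y \<subseteq> inversions n J"
    using JJ unfolding is_join_def weak_le_def by auto
  have mJ2: "(m,J) \<in> R2" using chain[OF R1 R2 K m Jn _ mJ] mx xJ by blast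
  have "(x,J) \<in> R2" using interval[OF R2 m Jn x mx(1) xJ(1) mJ2] .
  moreover have "(y,J) \<in> R2" using interval[OF R2 m Jn y mx(2) xJ(2) mJ2] .
  ultimately have "(x,y) \<in> R2" using c_trans[OF R2] c_sym[OF R2] by metis
  then show "p \<in> R2" using p by simp
qed

lemma K_inj:
  assumes "lattice_congruence n R1" "lattice_congruence n R2" "Kset n R1 = Kset n R2"
  shows "R1 = R2"
  using K_sub assms by (metis equalityI order_refl)


lemma sw_in_Sn: "1 \<le> a \<Longrightarrow> a + 1 \<le> n \<Longrightarrow> sw a \<in> Sn n"
  unfolding Sn_def using sw_perm by blast

lemma sw_one_desc:
  assumes a: "1 \<le> a" "a + 1 \<le> n" shows "one_desc n (sw a) a"
  unfolding one_desc_def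
proof (intro conjI allI impI)
  show "sw a \<in> Sn n" using sw_in_Sn[OF a] .
  show "desc n (sw a) a" unfolding desc_def using a by simp
  fix k assume "desc n (sw a) k"
  then have k: "sw a (k+1) < sw a k" unfolding desc_def by simp
  show "k = a"
  proof (rule ccontr)
    assume ka: "k \<noteq> a"
    show False
    proof (cases "k + 1 = a")
      case True
      then have "sw a (k+1) = a + 1" "sw a k = k" by simp_all
      then show False using k True by simp
    next
      case False
      show False
      proof (cases "k = a + 1")
        case True
        then have "sw a (k+1) = k + 1" "sw a k = a" by simp_all
        then show False using k True by simp
      next
        case False
        then have "sw a (k+1) = k + 1" "sw a k = k" using ka \<open>k + 1 \<noteq> a\<close> by simp_all
        then show False using k by simp
      qed
    qed
  qed
qed

lemma ess_K:
  assumes R: "lattice_congruence n R" and E: "essential n R" and a: "1 \<le> a" "a + 1 \<le> n"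
  shows "sw a \<notin> Kset n R"
proof
  assume "sw a \<in> Kset n R"
  then obtain k where od: "one_desc n (sw a) k" and r: "(sw a \<circ> sw k, sw a) \<in> R" unfolding Kset_def by blast
  have "k = a" using od sw_one_desc[OF a] unfolding one_desc_def by blast
  then have r0: "(id, sw a) \<in> R" using r by simp
  have s: "sw a \<in> Sn n" using sw_in_Sn[OF a] .
  have isw: "inversions n (sw a) = {(a, a+1)}" using inv_sw_id[OF a] by simp
  have "fence_in_FR n R a (a+1) {}" unfolding fence_in_FR_def
  proof (clarify)
    fix u v assume "(u,v) \<in> fence_edges n a (a+1) {}"
    then obtain i where u: "u \<in> Sn n" and i: "1 \<le> i" "i + 1 \<le> n" and ui: "u i = a" "u (i+1) = a + 1"
      and v: "v = u \<circ> sw i" unfolding fence_edges_def by blast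
    have vS: "v \<in> Sn n" unfolding v using sw_Sn[OF u i] .
    have iv: "inversions n v = insert (a, a+1) (inversions n u)"
      unfolding v using asc_sw[OF u i] ui by simp
    have J1: "is_join n id u u" using join_le[OF id_Sn u] inv_id_empty by simp
    have J2: "is_join n (sw a) u v" unfolding is_join_def weak_le_def
    proof (intro conjI ballI impI)
      show "v \<in> Sn n" using vS .
      show "inversions n (sw a) \<subseteq> inversions n v" unfolding isw iv by blast
      show "inversions n u \<subseteq> inversions n v" unfolding iv by blast
      fix z assume "z \<in> Sn n" "inversions n (sw a) \<subseteq> inversions n z \<and> inversions n u \<subseteq> inversions n z"
      then show "inversions n v \<subseteq> inversions n z" unfolding isw iv by blast
    qed
    show "(u,v) \<in> R" using cj[OF R id_Sn s u r0 J1 J2] .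
  qed
  then show False using E a unfolding essential_def by blast
qed

definition Dset :: "nat \<Rightarrow> (nat \<Rightarrow> nat) \<Rightarrow> nat set" where
  "Dset n j = {j p | p. 1 \<le> p \<and> (\<exists>k. p \<le> k \<and> desc n j k)}"

lemma Dset_od:
  assumes od: "one_desc n j k" shows "Dset n j = j ` {1..k}"
proof -
  have e: "(\<exists>k'. p \<le> k' \<and> desc n j k') \<longleftrightarrow> p \<le> k" for p
    using od unfolding one_desc_def by blast
  show ?thesis
  proof (rule set_eqI)
    fix x
    have "x \<in> Dset n j \<longleftrightarrow> (\<exists>p. x = j p \<and> 1 \<le> p \<and> (\<exists>k'. p \<le> k' \<and> desc n j k'))"
      unfolding Dset_def by blast
    also have "\<dots> \<longleftrightarrow> (\<exists>p. x = j p \<and> 1 \<le> p \<and> p \<le> k)" using e by blast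
    also have "\<dots> \<longleftrightarrow> x \<in> j ` {1..k}" by auto
    finally show "x \<in> Dset n j \<longleftrightarrow> x \<in> j ` {1..k}" .
  qed
qed

lemma od_asc:
  assumes od: "one_desc n j k" and r: "1 \<le> r" "r + 1 \<le> n" "r \<noteq> k"
  shows "j r < j (r+1)"
proof -
  have j: "j \<in> Sn n" using od unfolding one_desc_def by blast
  have "\<not> desc n j r" using od r unfolding one_desc_def by blast
  then have "\<not> j (r+1) < j r" using r unfolding desc_def by simp
  moreover have "j (r+1) \<noteq> j r" using w_inj[OF j, of "r+1" r] by auto
  ultimately show ?thesis by simp
qed

lemma od_inv:
  assumes od: "one_desc n j k"
  shows "inversions n j = {(a,b). 1 \<le> a \<and> a < b \<and> b \<le> n \<and> b \<in> j ` {1..k} \<and> a \<notin> j ` {1..k}}"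
proof -
  have j: "j \<in> Sn n" using od unfolding one_desc_def by blast
  have kk: "1 \<le> k" "k + 1 \<le> n" using od unfolding one_desc_def desc_def by auto
  have img: "c \<in> j ` {1..k} \<longleftrightarrow> inv j c \<le> k" if c: "c \<in> {1..n}" for c
  proof
    assume "c \<in> j ` {1..k}"
    then obtain p where "p \<in> {1..k}" "c = j p" by blast
    then show "inv j c \<le> k" using inv_w[OF j] by simp
  next
    assume "inv j c \<le> k"
    moreover have "1 \<le> inv j c" using inv_in[OF j c] by simp
    ultimately show "c \<in> j ` {1..k}" using w_inv[OF j, of c] by (metis atLeastAtMost_iff imageI)
  qed
  have key: "inv j b < inv j a \<longleftrightarrow> inv j b \<le> k \<and> \<not> inv j a \<le> k"
    if ab: "1 \<le> a" "a < b" "b \<le> n" for a b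
  proof
    assume lt: "inv j b < inv j a"
    have ra: "inv j a \<in> {1..n}" "inv j b \<in> {1..n}" using inv_in[OF j] ab by auto
    show "inv j b \<le> k \<and> \<not> inv j a \<le> k"
    proof (rule ccontr)
      assume "\<not> (inv j b \<le> k \<and> \<not> inv j a \<le> k)"
      then have "inv j a \<le> k \<or> k < inv j b" by auto
      then have "j (inv j b) < j (inv j a)"
      proof
        assume "inv j a \<le> k"
        then show ?thesis using mono_run[of "inv j b" "inv j a" j] od_asc[OF od] lt ra by force
      next
        assume "k < inv j b"
        then show ?thesis using mono_run[of "inv j b" "inv j a" j] od_asc[OF od] lt ra by force
      qed
      then show False using w_inv[OF j] ab by simp
    qed
  next
    assume "inv j b \<le> k \<and> \<not> inv j a \<le> k"
    then show "inv j b < inv j a" by simp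
  qed
  show ?thesis
  proof (rule set_eqI)
    fix p :: "nat \<times> nat" obtain a b where p: "p = (a,b)" by (cases p)
    show "p \<in> inversions n j \<longleftrightarrow> p \<in> {(a,b). 1 \<le> a \<and> a < b \<and> b \<le> n \<and> b \<in> j ` {1..k} \<and> a \<notin> j ` {1..k}}"
    proof (cases "1 \<le> a \<and> a < b \<and> b \<le> n")
      case True
      then have "a \<in> {1..n}" "b \<in> {1..n}" by auto
      then show ?thesis unfolding p using inv_mem[OF j] key[of a b] True img by simp
    next
      case False
      then show ?thesis unfolding p using inv_mem[OF j] by auto
    qed
  qed
qed

lemma Dset_inj:
  assumes "one_desc n j k" "one_desc n j' k'" "Dset n j = Dset n j'"
  shows "j = j'"
proof -
  have "inversions n j = inversions n j'"
    using od_inv[OF assms(1)] od_inv[OF assms(2)] assms(3) Dset_od[OF assms(1)] Dset_od[OF assms(2)] by simp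
  then show ?thesis using inversions_inj assms unfolding one_desc_def by blast
qed

lemma Dset_sub:
  assumes od: "one_desc n j k" shows "Dset n j \<subseteq> {1..n}"
proof
  fix x assume "x \<in> Dset n j"
  then obtain p where p: "p \<in> {1..k}" "x = j p" using Dset_od[OF od] by blast
  have j: "j \<in> Sn n" and "k + 1 \<le> n" using od unfolding one_desc_def desc_def by auto
  then have "p \<in> {1..n}" using p by auto
  then show "x \<in> {1..n}" using w_in[OF j] p by blast
qed

lemma Dset_not_seg:
  assumes od: "one_desc n j k" shows "Dset n j \<noteq> {1..m}"
proof
  assume e: "Dset n j = {1..m}"
  have j: "j \<in> Sn n" using od unfolding one_desc_def by blast
  have kk: "1 \<le> k" "k + 1 \<le> n" "j (k+1) < j k" using od unfolding one_desc_def desc_def by auto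
  have injk: "inj_on j {1..k}" using permutes_inj_on[OF Sn_perm[OF j]] .
  have "card (Dset n j) = k" using Dset_od[OF od] card_image[OF injk] by simp
  then have mk: "m = k" using e by simp
  have "j k \<in> Dset n j" using Dset_od[OF od] kk by simp
  then have jk: "j k \<le> k" using e mk by simp
  have "j (k+1) \<notin> j ` {1..k}"
  proof
    assume "j (k+1) \<in> j ` {1..k}"
    then obtain p where "p \<in> {1..k}" "j (k+1) = j p" by blast
    then show False using w_inj[OF j, of "k+1" p] by auto
  qed
  then have "j (k+1) \<notin> {1..k}" using Dset_od[OF od] e mk by simp
  moreover have "1 \<le> j (k+1)" using w_in[OF j, of "k+1"] kk by simp
  ultimately have "k < j (k+1)" by simp
  then show False using jk kk by simp
qed

lemma Dset_sw:
  assumes a: "1 \<le> a" "a + 1 \<le> n" shows "Dset n (sw a) = insert (a+1) {1..a-1}"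
proof -
  have "Dset n (sw a) = sw a ` {1..a}" using Dset_od[OF sw_one_desc[OF a]] .
  also have "{1..a} = insert a {1..a-1}" using a by auto
  also have "sw a ` insert a {1..a-1} = insert (a+1) (sw a ` {1..a-1})" by simp
  also have "sw a ` {1..a-1} = {1..a-1}"
  proof (rule image_cong[THEN trans])
    show "{1..a-1} = {1..a-1}" by simp
    show "\<And>x. x \<in> {1..a-1} \<Longrightarrow> sw a x = x" by auto
    show "(\<lambda>x. x) ` {1..a-1} = {1..a-1}" by simp
  qed
  finally show ?thesis .
qed


definition J1set :: "nat \<Rightarrow> (nat \<Rightarrow> nat) set" where
  "J1set n = {j. \<exists>k. one_desc n j k}"

definition Aset :: "nat \<Rightarrow> (nat \<Rightarrow> nat) set" where
  "Aset n = sw ` {1..n-1}"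

lemma card_seg: "card ((\<lambda>m. {1..m::nat}) ` {0..n}) = n + 1"
proof -
  have "inj_on (\<lambda>m. {1..m::nat}) {0..n}"
  proof (rule inj_onI)
    fix x y :: nat assume e: "{1..x} = {1..y}"
    have "card {1..x} = x" "card {1..y} = y" by simp_all
    then show "x = y" using e by metis
  qed
  then show ?thesis using card_image by fastforce
qed

lemma card_atm1: "1 \<le> a \<Longrightarrow> card (insert (a+1) {1..a-1::nat}) = a"
  by simp

lemma card_atm: "card ((\<lambda>a. insert (a+1) {1..a-1::nat}) ` {1..n-1}) = n - 1"
proof -
  have "inj_on (\<lambda>a. insert (a+1) {1..a-1::nat}) {1..n-1}"
  proof (rule inj_onI)
    fix x y :: nat assume xy: "x \<in> {1..n-1}" "y \<in> {1..n-1}" "insert (x+1) {1..x-1} = insert (y+1) {1..y-1}"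
    have cx: "card (insert (x+1) {1..x-1}) = x" using xy by (intro card_atm1) simp
    have cy: "card (insert (y+1) {1..y-1}) = y" using xy by (intro card_atm1) simp
    show "x = y" using cx cy xy(3) by metis
  qed
  then show ?thesis using card_image by fastforce
qed

lemma seg_atm_disj: "((\<lambda>m. {1..m::nat}) ` {0..n}) \<inter> ((\<lambda>a. insert (a+1) {1..a-1::nat}) ` {1..n-1}) = {}"
proof (rule ccontr)
  assume "\<not> ?thesis"
  then obtain m a where ma: "m \<in> {0..n}" "a \<in> {1..n-1}" "{1..m} = insert (a+1) {1..a-1}" by blast
  have "card {1..m} = m" by simp
  moreover have "card (insert (a+1) {1..a-1}) = a" using ma by (intro card_atm1) simp
  ultimately have "m = a" using ma(3) by metis
  have "a \<in> {1..m}" using \<open>m = a\<close> ma(2) by simp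
  then have "a \<in> insert (a+1) {1..a-1}" by (simp only: ma(3))
  moreover have "a \<noteq> a + 1" by simp
  moreover have "a \<notin> {1..a-1}" by (cases a) auto
  ultimately show False by blast
qed

lemma card_J1A:
  assumes n3: "3 \<le> n" shows "card (J1set n - Aset n) \<le> 2 ^ n - 2 * n"
proof -
  let ?Seg = "(\<lambda>m. {1..m::nat}) ` {0..n}"
  let ?Atm = "(\<lambda>a. insert (a+1) {1..a-1::nat}) ` {1..n-1}"
  let ?T = "Pow {1..n} - (?Seg \<union> ?Atm)"
  have inj: "inj_on (Dset n) (J1set n - Aset n)"
    by (rule inj_onI) (use Dset_inj in \<open>auto simp: J1set_def\<close>)
  have sub: "Dset n ` (J1set n - Aset n) \<subseteq> ?T"
  proof
    fix D assume "D \<in> Dset n ` (J1set n - Aset n)"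
    then obtain j k where jA: "j \<notin> Aset n" and od: "one_desc n j k" and D: "D = Dset n j"
      unfolding J1set_def by blast
    have "D \<subseteq> {1..n}" using Dset_sub[OF od] D by simp
    moreover have "D \<notin> ?Seg" using Dset_not_seg[OF od] D by blast
    moreover have "D \<notin> ?Atm"
    proof
      assume "D \<in> ?Atm"
      then obtain a where a: "a \<in> {1..n-1}" "D = insert (a+1) {1..a-1}" by blast
      then have a1: "1 \<le> a" "a + 1 \<le> n" using n3 by auto
      then have "Dset n j = Dset n (sw a)" using Dset_sw a D by simp
      then have "j = sw a" using Dset_inj[OF od sw_one_desc[OF a1]] by simp
      then have "j \<in> Aset n" unfolding Aset_def using a by blast
      then show False using jA by simp
    qed
    ultimately show "D \<in> ?T" by blast
  qed
  have fT: "finite ?T" by simp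
  have "card (J1set n - Aset n) = card (Dset n ` (J1set n - Aset n))" using card_image[OF inj] by simp
  also have "\<dots> \<le> card ?T" using card_mono[OF fT sub] .
  also have "card ?T = card (Pow {1..n}) - card (?Seg \<union> ?Atm)"
  proof (rule card_Diff_subset)
    show "finite (?Seg \<union> ?Atm)" by simp
    show "?Seg \<union> ?Atm \<subseteq> Pow {1..n}" using n3 by auto
  qed
  also have "card (?Seg \<union> ?Atm) = (n + 1) + (n - 1)"
    using card_Un_disjoint[of ?Seg ?Atm] seg_atm_disj[of n] card_seg[of n] card_atm[of n] by simp
  also have "card (Pow {1..n::nat}) = 2 ^ n" by (simp add: card_Pow)
  finally show ?thesis using n3 by simp
qed

lemma Kset_sub:
  assumes R: "R \<in> essential_congruences n"
  shows "Kset n R \<in> Pow (J1set n - Aset n)"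
proof -
  have L: "lattice_congruence n R" and E: "essential n R" using R unfolding essential_congruences_def by auto
  have "Kset n R \<subseteq> J1set n" unfolding Kset_def J1set_def by blast
  moreover have "Kset n R \<inter> Aset n = {}"
  proof -
    have "sw a \<notin> Kset n R" if "a \<in> {1..n-1}" for a
    proof -
      have "1 \<le> a" "a + 1 \<le> n" using that by auto
      then show ?thesis using ess_K[OF L E] by blast
    qed
    then show ?thesis unfolding Aset_def by blast
  qed
  ultimately show ?thesis by blast
qed

lemma finite_J1: "finite (J1set n)"
proof -
  have "J1set n \<subseteq> Sn n" unfolding J1set_def one_desc_def by blast
  then show ?thesis using finite_Sn finite_subset by blast
qed

lemma upper_bound:
  assumes n3: "3 \<le> n" shows "card (essential_congruences n) \<le> 2 ^ (2 ^ n - 2 * n)"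
proof -
  have inj: "inj_on (Kset n) (essential_congruences n)"
    by (rule inj_onI) (use K_inj in \<open>auto simp: essential_congruences_def\<close>)
  have sub: "Kset n ` essential_congruences n \<subseteq> Pow (J1set n - Aset n)" using Kset_sub by blast
  have fin: "finite (J1set n - Aset n)" using finite_J1 by blast
  have "card (essential_congruences n) \<le> card (Pow (J1set n - Aset n))"
    using card_inj_on_le[OF inj sub] fin by simp
  also have "\<dots> = 2 ^ card (J1set n - Aset n)" using card_Pow fin by blast
  also have "\<dots> \<le> 2 ^ (2 ^ n - 2 * n)" using card_J1A[OF n3] by (intro power_increasing) simp_all
  finally show ?thesis .
qed

lemma equiv_from_quot:
  assumes "equiv A R" shows "R = {(x,y). \<exists>X\<in>A//R. x \<in> X \<and> y \<in> X}"
proof (rule set_eqI)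
  fix p :: "'a \<times> 'a" obtain x y where p: "p = (x,y)" by (cases p)
  show "p \<in> R \<longleftrightarrow> p \<in> {(x,y). \<exists>X\<in>A//R. x \<in> X \<and> y \<in> X}"
  proof
    assume "p \<in> R"
    then have xy: "(x,y) \<in> R" using p by simp
    then have "x \<in> A" using assms equiv_type by blast
    then have "R``{x} \<in> A//R" by (rule quotientI)
    moreover have "x \<in> R``{x}" using equiv_class_self[OF assms \<open>x \<in> A\<close>] .
    moreover have "y \<in> R``{x}" using xy by blast
    ultimately show "p \<in> {(x,y). \<exists>X\<in>A//R. x \<in> X \<and> y \<in> X}" using p by blast
  next
    assume "p \<in> {(x,y). \<exists>X\<in>A//R. x \<in> X \<and> y \<in> X}"
    then obtain X where X: "X \<in> A//R" "x \<in> X" "y \<in> X" using p by blast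
    obtain z where "X = R``{z}" using X(1) quotientE by metis
    then have "(z,x) \<in> R" "(z,y) \<in> R" using X by auto
    then have "(x,y) \<in> R" using assms unfolding equiv_def by (meson symD transD)
    then show "p \<in> R" using p by simp
  qed
qed

lemma quot_inj: "inj_on (quotient_graph n) (essential_congruences n)"
proof (rule inj_onI)
  fix R1 R2 assume R1: "R1 \<in> essential_congruences n" and R2: "R2 \<in> essential_congruences n"
    and e: "quotient_graph n R1 = quotient_graph n R2"
  have eq1: "equiv (Sn n) R1" and eq2: "equiv (Sn n) R2"
    using R1 R2 unfolding essential_congruences_def lattice_congruence_def by auto
  have "Sn n // R1 = Sn n // R2" using e unfolding quotient_graph_def by simp
  then show "R1 = R2" using equiv_from_quot[OF eq1] equiv_from_quot[OF eq2] by simp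
qed

theorem mainTheorem8:
  fixes n :: nat
  assumes "n \<ge> 3"
  shows "2 ^ (2 ^ (n - 2)) \<le> card (essential_congruences n)
       \<and> card (essential_congruences n) \<le> 2 ^ (2 ^ n - 2 * n)
       \<and> card (quotient_graph n ` essential_congruences n) = card (essential_congruences n)"
  using lower_bound[OF assms] upper_bound[OF assms] card_image[OF quot_inj] by simp


end
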